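(* There is a polynomial-time algorithm that, given an approval-based election $E=(C,V)$, computes the unique smallest winning committee of $E$ under the NAV rule. Moreover, there is a polynomial-time algorithm that, given $E$ and an integer $k$, computes a NAV winning committee of size exactly $k$ if one exists (and reports that none exists otherwise).
   Context: An approval-based election $E=(C,V)$ consists of a finite set $C$ of candidates and a list $V=(v_1,\dots,v_n)$ of voters, each identified with its approval ballot $v_i\subseteq C$. For $S\subseteq C$ write $\overline{S}=C\setminus S$. The NAV score of a committee $S\subseteq C$ is $\sum_{i=1}^n\big(|S\cap v_i|-|S\cap\overline{v_i}|\big)$, and the NAV rule outputs all committees of maximum NAV score (these tie as co-winners). *)

theory Defs
  imports Main
begin

definition nav_score :: "'a set \<Rightarrow> 'a set list \<Rightarrow> 'a set \<Rightarrow> int" where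
  "nav_score C V S =
     (\<Sum>v\<leftarrow>V. int (card (S \<inter> v)) - int (card (S \<inter> (C - v))))"

definition nav_winner :: "'a set \<Rightarrow> 'a set list \<Rightarrow> 'a set \<Rightarrow> bool" where
  "nav_winner C V S \<longleftrightarrow> S \<subseteq> C \<and> (\<forall>T. T \<subseteq> C \<longrightarrow> nav_score C V T \<le> nav_score C V S)"

definition valid_election :: "nat \<Rightarrow> nat set list \<Rightarrow> bool" where
  "valid_election m V \<longleftrightarrow> (\<forall>v\<in>set V. v \<subseteq> {0..<m})"

datatype instr =
    Const nat nat
  | Add nat nat nat
  | Sub nat nat nat
  | Load nat nat
  | Store nat nat
  | Jz nat nat
  | Halt

type_synonym config = "nat \<times> (nat \<Rightarrow> nat)"

definition halted :: "instr list \<Rightarrow> config \<Rightarrow> bool" where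
  "halted P c \<longleftrightarrow> fst c \<ge> length P \<or> P ! fst c = Halt"

fun exec_instr :: "instr \<Rightarrow> config \<Rightarrow> config" where
  "exec_instr (Const r k) (pc, mem) = (Suc pc, mem(r := k))"
| "exec_instr (Add r a b) (pc, mem) = (Suc pc, mem(r := mem a + mem b))"
| "exec_instr (Sub r a b) (pc, mem) = (Suc pc, mem(r := mem a - mem b))"
| "exec_instr (Load r a) (pc, mem) = (Suc pc, mem(r := mem (mem a)))"
| "exec_instr (Store a r) (pc, mem) = (Suc pc, mem(mem a := mem r))"
| "exec_instr (Jz r l) (pc, mem) = (if mem r = 0 then l else Suc pc, mem)"
| "exec_instr Halt c = c"

definition step :: "instr list \<Rightarrow> config \<Rightarrow> config" where
  "step P c = (if halted P c then c else exec_instr (P ! fst c) c)"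

definition runs_within :: "instr list \<Rightarrow> (nat \<Rightarrow> nat) \<Rightarrow> nat \<Rightarrow> (nat \<Rightarrow> nat) \<Rightarrow> bool" where
  "runs_within P mem0 t mem \<longleftrightarrow>
     halted P ((step P ^^ t) (0, mem0)) \<and> snd ((step P ^^ t) (0, mem0)) = mem"

text \<open>Election with candidates 0..<m and ballots V: mem 0 = m, mem 1 = number of voters,
  and the m*n approval bit-matrix stored from address off on
  (entry for voter i and candidate c at address off + i*m + c); all other cells 0
  (except those set explicitly, e.g. k at address 2).\<close>
definition enc_election :: "nat \<Rightarrow> nat \<Rightarrow> nat set list \<Rightarrow> nat \<Rightarrow> nat" where
  "enc_election off m V a =
     (if a = 0 then m
      else if a = 1 then length V
      else if off \<le> a \<and> a < off + length V * m then
        (if (a - off) mod m \<in> V ! ((a - off) div m) then 1 else 0)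
      else 0)"

definition dec_committee :: "nat \<Rightarrow> nat \<Rightarrow> (nat \<Rightarrow> nat) \<Rightarrow> nat set" where
  "dec_committee off m mem = {c. c < m \<and> mem (off + c) \<noteq> 0}"

text \<open>Size of the input: the approval matrix plus the candidate list.\<close>
definition election_size :: "nat \<Rightarrow> nat set list \<Rightarrow> nat" where
  "election_size m V = (m + 1) * (length V + 1)"

end

theory Submission
  imports Defs
begin


definition acnt :: "nat set list \<Rightarrow> nat \<Rightarrow> nat" where
  "acnt V c = length (filter (\<lambda>v. c \<in> v) V)"

lemma card_split_int:
  assumes "finite S"
  shows "int (card (S \<inter> v)) - int (card (S - v)) = (\<Sum>c\<in>S. if c \<in> v then 1 else -1)"
proof -
  have "(\<Sum>c\<in>S. (if c \<in> v then 1 else -1::int)) = (\<Sum>c\<in>S \<inter> v. 1) + (\<Sum>c\<in>S - v. -1)"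
    using assms by (simp add: sum.If_cases Diff_eq)
  then show ?thesis by simp
qed

lemma score_eq:
  assumes "S \<subseteq> C" "finite S"
  shows "nav_score C V S = (\<Sum>c\<in>S. 2 * int (acnt V c) - int (length V))"
proof (induction V)
  case Nil
  then show ?case by (simp add: nav_score_def acnt_def)
next
  case (Cons v V)
  have c1: "S \<inter> (C - v) = S - v"
    using assms(1) by blast
  have "nav_score C (v # V) S = int (card (S \<inter> v)) - int (card (S \<inter> (C - v))) + nav_score C V S"
    by (simp add: nav_score_def)
  also have "\<dots> = (\<Sum>c\<in>S. if c \<in> v then 1 else -1) + (\<Sum>c\<in>S. 2 * int (acnt V c) - int (length V))"
    unfolding c1 card_split_int[OF assms(2)] Cons ..
  also have "\<dots> = (\<Sum>c\<in>S. (if c \<in> v then 1 else -1) + (2 * int (acnt V c) - int (length V)))"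
    by (simp add: sum.distrib)
  also have "\<dots> = (\<Sum>c\<in>S. 2 * int (acnt (v#V) c) - int (length (v#V)))"
    by (rule sum.cong) (auto simp: acnt_def)
  finally show ?case .
qed


definition wt :: "nat set list \<Rightarrow> nat \<Rightarrow> int" where
  "wt V c = 2 * int (acnt V c) - int (length V)"

definition strict :: "nat \<Rightarrow> nat set list \<Rightarrow> nat set" where
  "strict m V = {c. c < m \<and> wt V c > 0}"
definition weak :: "nat \<Rightarrow> nat set list \<Rightarrow> nat set" where
  "weak m V = {c. c < m \<and> wt V c \<ge> 0}"

lemma score_wt: "S \<subseteq> {0..<m} \<Longrightarrow> nav_score {0..<m} V S = (\<Sum>c\<in>S. wt V c)"
  unfolding wt_def by (rule score_eq) (auto intro: finite_subset)

lemma winner_iff: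
  "nav_winner {0..<m} V S \<longleftrightarrow> strict m V \<subseteq> S \<and> S \<subseteq> weak m V"
proof
  assume W: "nav_winner {0..<m} V S"
  hence SC: "S \<subseteq> {0..<m}" by (simp add: nav_winner_def)
  have fS: "finite S" using SC finite_subset by blast
  have 1: "strict m V \<subseteq> S"
  proof
    fix c assume c: "c \<in> strict m V"
    show "c \<in> S"
    proof (rule ccontr)
      assume "c \<notin> S"
      have "insert c S \<subseteq> {0..<m}" using c SC by (auto simp: strict_def)
      hence "nav_score {0..<m} V (insert c S) \<le> nav_score {0..<m} V S" using W by (simp add: nav_winner_def)
      moreover have "nav_score {0..<m} V (insert c S) = wt V c + nav_score {0..<m} V S"
        using score_wt[OF \<open>insert c S \<subseteq> _\<close>] score_wt[OF SC] fS \<open>c \<notin> S\<close> by simp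
      ultimately show False using c by (simp add: strict_def)
    qed
  qed
  have 2: "S \<subseteq> weak m V"
  proof
    fix c assume c: "c \<in> S"
    show "c \<in> weak m V"
    proof (rule ccontr)
      assume nw: "c \<notin> weak m V"
      have sub: "S - {c} \<subseteq> {0..<m}" using SC by auto
      hence "nav_score {0..<m} V (S - {c}) \<le> nav_score {0..<m} V S" using W by (simp add: nav_winner_def)
      moreover have "nav_score {0..<m} V S = wt V c + nav_score {0..<m} V (S - {c})"
        using score_wt[OF sub] score_wt[OF SC] fS c by (simp add: sum.remove)
      ultimately show False using nw c SC by (auto simp: weak_def)
    qed
  qed
  show "strict m V \<subseteq> S \<and> S \<subseteq> weak m V" using 1 2 by blast
next
  assume A: "strict m V \<subseteq> S \<and> S \<subseteq> weak m V"
  have SC: "S \<subseteq> {0..<m}" using A by (auto simp: weak_def)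
  have fS: "finite S" using SC finite_subset by blast
  have fst: "finite (strict m V)" by (simp add: strict_def)
  have eqS: "(\<Sum>c\<in>S. wt V c) = (\<Sum>c\<in>strict m V. wt V c)"
    by (rule sum.mono_neutral_right[OF fS]) (use A in \<open>auto simp: strict_def weak_def\<close>)
  have "nav_score {0..<m} V T \<le> nav_score {0..<m} V S" if T: "T \<subseteq> {0..<m}" for T
  proof -
    have fT: "finite T" using T finite_subset by blast
    have "(\<Sum>c\<in>T. wt V c) = (\<Sum>c\<in>T \<inter> strict m V. wt V c) + (\<Sum>c\<in>T - strict m V. wt V c)"
      using fT by (metis sum.Int_Diff)
    also have "(\<Sum>c\<in>T - strict m V. wt V c) \<le> 0"
      by (rule sum_nonpos) (use T in \<open>auto simp: strict_def\<close>)
    also have "(\<Sum>c\<in>T \<inter> strict m V. wt V c) \<le> (\<Sum>c\<in>strict m V. wt V c)"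
      by (rule sum_mono2[OF fst]) (auto simp: strict_def)
    finally show ?thesis using score_wt[OF T] score_wt[OF SC] eqS by simp
  qed
  thus "nav_winner {0..<m} V S" using SC by (simp add: nav_winner_def)
qed

lemma card_weak_ge: "card (strict m V) \<le> card (weak m V)"
  by (rule card_mono) (auto simp: strict_def weak_def)

lemma min_winner:
  assumes "nav_winner {0..<m} V T" "card T \<le> card (strict m V)"
  shows "T = strict m V"
proof -
  have "strict m V \<subseteq> T" "T \<subseteq> {0..<m}" using assms(1) winner_iff[of m V T]
    by (auto simp: weak_def)
  moreover have "finite T" using \<open>T \<subseteq> _\<close> finite_subset by blast
  ultimately show ?thesis using assms(2) card_seteq by blast
qed

lemma strict_sub_weak: "strict m V \<subseteq> weak m V"
  by (auto simp: strict_def weak_def)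

lemma exists_k_iff:
  "(\<exists>S. nav_winner {0..<m} V S \<and> card S = k) \<longleftrightarrow> card (strict m V) \<le> k \<and> k \<le> card (weak m V)"
proof
  assume "\<exists>S. nav_winner {0..<m} V S \<and> card S = k"
  then obtain S where S0: "nav_winner {0..<m} V S" "card S = k" by blast
  have S: "strict m V \<subseteq> S" "S \<subseteq> weak m V" "card S = k" using S0 by (simp_all add: winner_iff)
  have fw: "finite (weak m V)" by (simp add: weak_def)
  have fS: "finite S" using S(2) fw by (rule finite_subset)
  show "card (strict m V) \<le> k \<and> k \<le> card (weak m V)"
    using card_mono[OF fS S(1)] card_mono[OF fw S(2)] S(3) by simp
next
  assume k: "card (strict m V) \<le> k \<and> k \<le> card (weak m V)"
  have fw: "finite (weak m V)" by (simp add: weak_def)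
  have fs: "finite (strict m V)" by (simp add: strict_def)
  have cd: "card (weak m V - strict m V) = card (weak m V) - card (strict m V)"
    using card_Diff_subset[OF fs strict_sub_weak] .
  have "k - card (strict m V) \<le> card (weak m V - strict m V)"
    using k cd by linarith
  from obtain_subset_with_card_n[OF this]
  obtain X where X: "X \<subseteq> weak m V - strict m V" "card X = k - card (strict m V)" by blast
  have fX: "finite X" using X(1) fw finite_subset by blast
  have dj: "strict m V \<inter> X = {}" using X(1) by blast
  let ?S = "strict m V \<union> X"
  have "card ?S = k"
    using card_Un_disjoint[OF fs fX dj] X(2) k by simp
  moreover have "nav_winner {0..<m} V ?S"
    using X(1) strict_sub_weak unfolding winner_iff by blast
  ultimately show "\<exists>S. nav_winner {0..<m} V S \<and> card S = k" by blast
qed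


definition at :: "instr list \<Rightarrow> nat \<Rightarrow> instr list \<Rightarrow> bool" where
  "at P pc is \<longleftrightarrow> pc + length is \<le> length P \<and> (\<forall>j<length is. P ! (pc+j) = is ! j)"

lemma at_Nil[simp]: "at P pc [] \<longleftrightarrow> pc \<le> length P"
  by (simp add: at_def)

lemma at_Cons: "at P pc (x # xs) \<longleftrightarrow> pc < length P \<and> P ! pc = x \<and> at P (Suc pc) xs"
proof
  assume A: "at P pc (x # xs)"
  hence l: "pc + Suc (length xs) \<le> length P" and e: "\<And>j. j < Suc (length xs) \<Longrightarrow> P ! (pc+j) = (x#xs) ! j"
    by (auto simp: at_def)
  have "P ! pc = x" using e[of 0] by simp
  moreover have "at P (Suc pc) xs" unfolding at_def
  proof (intro conjI allI impI)
    show "Suc pc + length xs \<le> length P" using l by simp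
    fix j assume "j < length xs"
    thus "P ! (Suc pc + j) = xs ! j" using e[of "Suc j"] by simp
  qed
  ultimately show "pc < length P \<and> P ! pc = x \<and> at P (Suc pc) xs" using l by simp
next
  assume A: "pc < length P \<and> P ! pc = x \<and> at P (Suc pc) xs"
  show "at P pc (x # xs)" unfolding at_def
  proof (intro conjI allI impI)
    show "pc + length (x # xs) \<le> length P" using A by (simp add: at_def)
    fix j assume j: "j < length (x # xs)"
    show "P ! (pc + j) = (x # xs) ! j"
    proof (cases j)
      case 0 thus ?thesis using A by simp
    next
      case (Suc j') thus ?thesis using A j by (simp add: at_def)
    qed
  qed
qed

lemma at_le: "at P pc xs \<Longrightarrow> pc \<le> length P"
  by (simp add: at_def)

lemma at_append: "at P pc (xs @ ys) \<longleftrightarrow> at P pc xs \<and> at P (pc + length xs) ys"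
  by (induction xs arbitrary: pc) (auto simp: at_Cons dest: at_le)

lemma at_self: "at P 0 P"
  by (simp add: at_def)

definition reach :: "instr list \<Rightarrow> config \<Rightarrow> nat \<Rightarrow> config \<Rightarrow> bool" where
  "reach P c T c' \<longleftrightarrow> (\<exists>t\<le>T. (step P ^^ t) c = c')"

lemma reach_refl: "reach P c 0 c"
  by (auto simp: reach_def)

lemma reach_trans: "reach P c T1 c' \<Longrightarrow> reach P c' T2 c'' \<Longrightarrow> reach P c (T1 + T2) c''"
proof -
  assume "reach P c T1 c'" "reach P c' T2 c''"
  then obtain t1 t2 where "t1 \<le> T1" "(step P ^^ t1) c = c'" "t2 \<le> T2" "(step P ^^ t2) c' = c''"
    by (auto simp: reach_def)
  moreover have "(step P ^^ (t2 + t1)) c = (step P ^^ t2) ((step P ^^ t1) c)"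
    by (simp add: funpow_add)
  ultimately show ?thesis unfolding reach_def by (intro exI[of _ "t2 + t1"]) auto
qed

lemma reach_mono: "reach P c T c' \<Longrightarrow> T \<le> T' \<Longrightarrow> reach P c T' c'"
  unfolding reach_def by (blast intro: order_trans)

lemma step_at: "at P pc [i] \<Longrightarrow> i \<noteq> Halt \<Longrightarrow> step P (pc, mem) = exec_instr i (pc, mem)"
  by (simp add: at_Cons step_def halted_def)

lemma reach_one: "at P pc [i] \<Longrightarrow> i \<noteq> Halt \<Longrightarrow> reach P (pc, mem) 1 (exec_instr i (pc, mem))"
  unfolding reach_def by (rule exI[of _ 1]) (simp add: step_at)

fun mexec :: "instr \<Rightarrow> (nat \<Rightarrow> nat) \<Rightarrow> (nat \<Rightarrow> nat)" where
  "mexec (Const r k) mem = mem(r := k)"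
| "mexec (Add r a b) mem = mem(r := mem a + mem b)"
| "mexec (Sub r a b) mem = mem(r := mem a - mem b)"
| "mexec (Load r a) mem = mem(r := mem (mem a))"
| "mexec (Store a r) mem = mem(mem a := mem r)"
| "mexec (Jz r l) mem = mem"
| "mexec Halt mem = mem"

fun straight :: "instr \<Rightarrow> bool" where
  "straight (Jz r l) = False"
| "straight Halt = False"
| "straight _ = True"

lemma exec_straight: "straight i \<Longrightarrow> exec_instr i (pc, mem) = (Suc pc, mexec i mem)"
  by (cases i) auto

lemma run_straight:
  "at P pc is \<Longrightarrow> list_all straight is \<Longrightarrow>
   reach P (pc, mem) (length is) (pc + length is, fold mexec is mem)"
proof (induction "is" arbitrary: pc mem)
  case Nil
  then show ?case by (simp add: reach_refl)
next
  case (Cons i "is")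
  have a1: "at P pc [i]" and a2: "at P (Suc pc) is" using Cons.prems(1) by (auto simp: at_Cons)
  have st: "straight i" "list_all straight is" using Cons.prems(2) by auto
  have "i \<noteq> Halt" using st by auto
  have r1: "reach P (pc, mem) 1 (Suc pc, mexec i mem)"
    using reach_one[OF a1 \<open>i \<noteq> Halt\<close>, of mem] exec_straight[OF st(1)] by simp
  have r2: "reach P (Suc pc, mexec i mem) (length is) (Suc pc + length is, fold mexec is (mexec i mem))"
    using Cons.IH[OF a2 st(2)] .
  show ?case using reach_trans[OF r1 r2] by simp
qed

lemma jz_zero: "at P pc [Jz r l] \<Longrightarrow> mem r = 0 \<Longrightarrow> reach P (pc, mem) 1 (l, mem)"
  using reach_one[of P pc "Jz r l" mem] by simp

lemma jz_nz: "at P pc [Jz r l] \<Longrightarrow> mem r \<noteq> 0 \<Longrightarrow> reach P (pc, mem) 1 (Suc pc, mem)"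
  using reach_one[of P pc "Jz r l" mem] by simp

lemma loop_rule_aux:
  assumes stp: "\<And>k mem. k < N \<Longrightarrow> I k mem \<Longrightarrow> \<exists>mem'. reach P (h, mem) T (h, mem') \<and> I (Suc k) mem'"
  assumes fin: "\<And>mem. I N mem \<Longrightarrow> \<exists>mem'. reach P (h, mem) T' (e, mem') \<and> Q mem'"
  shows "\<forall>k mem. N - k = d \<longrightarrow> k \<le> N \<longrightarrow> I k mem \<longrightarrow> (\<exists>mem'. reach P (h, mem) ((N - k) * T + T') (e, mem') \<and> Q mem')"
proof (induction d)
  case 0
  show ?case using fin by auto
next
  case (Suc d)
  show ?case
  proof (intro allI impI)
    fix k mem assume d: "N - k = Suc d" and kN0: "k \<le> N" and Ik: "I k mem"
    have kN: "k < N" using d by simp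
    obtain mem1 where m1: "reach P (h, mem) T (h, mem1)" "I (Suc k) mem1" using stp[OF kN Ik] by blast
    obtain mem2 where m2: "reach P (h, mem1) ((N - Suc k) * T + T') (e, mem2)" "Q mem2"
      using Suc.IH d m1(2) kN by (metis Suc_leI diff_Suc_Suc diff_Suc_1 Suc_diff_Suc)
    have "N - k = Suc (N - Suc k)" using kN by simp
    hence "T + ((N - Suc k) * T + T') = (N - k) * T + T'" by simp
    then show "\<exists>mem'. reach P (h, mem) ((N - k) * T + T') (e, mem') \<and> Q mem'"
      using reach_trans[OF m1(1) m2(1)] m2(2) by metis
  qed
qed

lemma loop_rule:
  assumes stp: "\<And>k mem. k < N \<Longrightarrow> I k mem \<Longrightarrow> \<exists>mem'. reach P (h, mem) T (h, mem') \<and> I (Suc k) mem'"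
  assumes fin: "\<And>mem. I N mem \<Longrightarrow> \<exists>mem'. reach P (h, mem) T' (e, mem') \<and> Q mem'"
  assumes I0: "I 0 mem"
  shows "\<exists>mem'. reach P (h, mem) (N * T + T') (e, mem') \<and> Q mem'"
proof -
  have H: "\<forall>k mem. N - k = N \<longrightarrow> k \<le> N \<longrightarrow> I k mem \<longrightarrow> (\<exists>mem'. reach P (h, mem) ((N - k) * T + T') (e, mem') \<and> Q mem')"
    apply (rule loop_rule_aux)
     apply (erule (1) stp)
    by (erule fin)
  show ?thesis using H[rule_format, of 0 mem] I0 by simp
qed


lemma at_nth: "at P pc blk \<Longrightarrow> j < length blk \<Longrightarrow> P ! (pc + j) = blk ! j \<and> pc + j < length P"
  by (simp add: at_def)

lemma step_gen: "at P pc blk \<Longrightarrow> j < length blk \<Longrightarrow> blk ! j \<noteq> Halt \<Longrightarrow>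
   step P (pc + j, mem) = exec_instr (blk ! j) (pc + j, mem)"
  using at_nth[of P pc blk j] by (simp add: step_def halted_def)

lemma step_gen': "at P pc blk \<Longrightarrow> pc \<le> q \<Longrightarrow> q - pc < length blk \<Longrightarrow> blk ! (q - pc) \<noteq> Halt \<Longrightarrow>
   step P (q, mem) = exec_instr (blk ! (q - pc)) (q, mem)"
  using step_gen[of P pc blk "q - pc" mem] by simp

lemma funpow_numeral: "(f::'a\<Rightarrow>'a) ^^ numeral k = f \<circ> f ^^ pred_numeral k"
  by (simp add: numeral_eq_Suc)

lemma funpow_1': "(f::'a\<Rightarrow>'a) ^^ 1 = f" by (simp add: One_nat_def)

lemma reach_eq: "(step P ^^ n) c = c' \<Longrightarrow> reach P c n c'"
  by (auto simp: reach_def)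

lemma reach_eqI: "(step P ^^ n) c = c' \<Longrightarrow> n \<le> T \<Longrightarrow> reach P c T c'"
  by (auto simp: reach_def)

lemma at_sub: "at P pc (xs @ ys @ zs) \<Longrightarrow> at P (pc + length xs) ys"
  by (simp add: at_append)


definition blkA :: "nat \<Rightarrow> nat \<Rightarrow> instr list" where
  "blkA g R = concat (map (\<lambda>j. [Add 1 1 1, Add 1 1 (g+j)]) [0..<R])"

lemma blkA_Suc: "blkA g (Suc j) = blkA g j @ [Add 1 1 1, Add 1 1 (g+j)]"
  by (simp add: blkA_def)

lemma blkA_0: "blkA g 0 = []" by (simp add: blkA_def)

lemma blkA_len[simp]: "length (blkA g R) = 2 * R"
  by (induction R) (simp_all add: blkA_0 blkA_Suc)

lemma blkA_straight: "list_all straight (blkA g R)"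
  by (simp add: blkA_def list_all_iff)

primrec bs :: "(nat \<Rightarrow> nat) \<Rightarrow> nat \<Rightarrow> nat" where
  "bs b 0 = 0"
| "bs b (Suc j) = 2 * bs b j + b j"

lemma fold_blkA: "2 \<le> g \<Longrightarrow> fold mexec (blkA g j) mem = mem(1 := 2^j * mem 1 + bs (\<lambda>i. mem (g+i)) j)"
proof (induction j)
  case 0 then show ?case by (simp add: blkA_def)
next
  case (Suc j)
  have e: "2 ^ Suc j * mem 1 + bs (\<lambda>i. mem (g+i)) (Suc j) =
     (2 ^ j * mem 1 + bs (\<lambda>i. mem (g+i)) j) + (2 ^ j * mem 1 + bs (\<lambda>i. mem (g+i)) j) + mem (g+j)"
    by simp
  have ne: "g + j \<noteq> 1" using Suc.prems by simp
  show ?case using Suc ne by (simp only: blkA_Suc fold_append comp_apply e) (simp add: fun_eq_iff)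
qed

lemma phaseA:
  assumes "at P pc (blkA g R)" "2 \<le> g"
  shows "reach P (pc, mem) (2*R) (pc + 2*R, mem(1 := 2^R * mem 1 + bs (\<lambda>i. mem (g+i)) R))"
  using run_straight[OF assms(1) blkA_straight, of mem] fold_blkA[OF assms(2)] by simp

definition tlv :: "(nat \<Rightarrow> nat) \<Rightarrow> nat \<Rightarrow> nat \<Rightarrow> nat" where
  "tlv b R j = (\<Sum>i = j..<R. b i * 2^(R - 1 - i))"

lemma bs_sum: "bs b j = (\<Sum>i<j. b i * 2^(j - 1 - i))"
proof (induction j)
  case 0 then show ?case by simp
next
  case (Suc j)
  have "(\<Sum>i<j. b i * 2^(Suc j - 1 - i)) = 2 * (\<Sum>i<j. b i * 2^(j - 1 - i))"
    unfolding sum_distrib_left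
  proof (rule sum.cong)
    fix x assume "x \<in> {..<j}"
    hence "Suc j - 1 - x = Suc (j - 1 - x)" by auto
    thus "b x * 2 ^ (Suc j - 1 - x) = 2 * (b x * 2 ^ (j - 1 - x))" by simp
  qed simp
  then show ?case using Suc by simp
qed

lemma bs_tl: "bs b R = tlv b R 0"
  by (simp add: bs_sum tlv_def atLeast0LessThan)

lemma tl_split: "j < R \<Longrightarrow> tlv b R j = b j * 2^(R - 1 - j) + tlv b R (Suc j)"
  unfolding tlv_def by (simp add: sum.atLeast_Suc_lessThan)

lemma tl_end: "tlv b R R = 0"
  by (simp add: tlv_def)

lemma tl_bound: assumes "\<And>i. b i \<le> 1" shows "tlv b R j < 2^(R - j)"
proof (induction "R - j" arbitrary: j)
  case 0 then show ?case by (simp add: tlv_def)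
next
  case (Suc d)
  then have jR: "j < R" by simp
  have "tlv b R (Suc j) < 2^(R - Suc j)" using Suc.hyps(1)[of "Suc j"] Suc.hyps(2) by simp
  moreover have "b j * 2^(R - 1 - j) \<le> 2^(R - 1 - j)" using assms[of j] by simp
  moreover have "(2::nat)^(R - j) = 2^(R - 1 - j) + 2^(R - Suc j)"
  proof -
    have "R - j = Suc (R - Suc j)" "R - 1 - j = R - Suc j" using jR by simp_all
    thus ?thesis by simp
  qed
  ultimately show ?case using tl_split[OF jR, of b] by linarith
qed


definition blkB :: "nat \<Rightarrow> nat \<Rightarrow> nat \<Rightarrow> instr list" where
  "blkB g R pc = [Const g 0, Const (g+1) 1, Const (g+2) 0, Const (g+3) (2^R),
    Add (g+4) 1 (g+1), Sub (g+4) (g+4) (g+3), Jz (g+4) (pc+10),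
    Sub 1 1 (g+3), Add (g+2) (g+2) (g+1), Jz g (pc+4)]"

lemma blkB_len[simp]: "length (blkB g R pc) = 10" by (simp add: blkB_def)

lemma phaseB:
  assumes at: "at P pc (blkB g R pc)" and g: "2 \<le> g" and m1: "mem 1 = 2^R * n + y" and y: "y < 2^R"
  shows "\<exists>mem'. reach P (pc, mem) (4 + (n * 6 + 3)) (pc + 10, mem') \<and> mem' 1 = y \<and> mem' (g+2) = n \<and>
     mem' g = 0 \<and> mem' (g+1) = 1 \<and> (\<forall>a. a \<noteq> 1 \<longrightarrow> a < g \<or> g + 5 \<le> a \<longrightarrow> mem' a = mem a)"
proof -
  note s = step_gen'[OF at]
  let ?I = "\<lambda>k m'. m' 1 = 2^R * (n - k) + y \<and> m' (g+2) = k \<and> m' g = 0 \<and> m' (g+1) = 1 \<and> m' (g+3) = 2^R \<and>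
     (\<forall>a. a \<noteq> 1 \<longrightarrow> a < g \<or> g + 5 \<le> a \<longrightarrow> m' a = mem a)"
  let ?Q = "\<lambda>m'. m' 1 = y \<and> m' (g+2) = n \<and>
     m' g = 0 \<and> m' (g+1) = 1 \<and> (\<forall>a. a \<noteq> 1 \<longrightarrow> a < g \<or> g + 5 \<le> a \<longrightarrow> m' a = mem a)"
  have init: "(step P ^^ 4) (pc, mem) = (pc + 4, mem(g := 0, g+1 := 1, g+2 := 0, g+3 := 2^R))"
    using g by (simp add: s blkB_def funpow_numeral funpow_1')
  have I0: "?I 0 (mem(g := 0, g+1 := 1, g+2 := 0, g+3 := 2^R))"
    using g m1 by simp
  have L: "\<exists>m'. reach P (pc + 4, mem(g := 0, g+1 := 1, g+2 := 0, g+3 := 2^R)) (n * 6 + 3) (pc + 10, m') \<and> ?Q m'"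
  proof (rule loop_rule[where I = ?I])
    fix k m' assume k: "k < n" and I: "?I k m'"
    have nz: "2^R * (n - k) + y + 1 - 2^R \<noteq> 0"
    proof -
      have "2^R \<le> 2^R * (n - k)" using k by simp
      thus ?thesis by linarith
    qed
    have eq: "2^R * (n - k) + y - 2^R = 2^R * (n - Suc k) + y"
    proof -
      have "n - k = Suc (n - Suc k)" using k by simp
      thus ?thesis by simp
    qed
    have "(step P ^^ 6) (pc + 4, m') = (pc + 4, m'(g+4 := 2^R * (n - k) + y + 1 - 2^R, 1 := 2^R * (n - k) + y - 2^R, g+2 := Suc k))"
      using I g nz by (simp add: s blkB_def funpow_numeral funpow_1')
    moreover have "?I (Suc k) (m'(g+4 := 2^R * (n - k) + y + 1 - 2^R, 1 := 2^R * (n - k) + y - 2^R, g+2 := Suc k))"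
      using I g eq by auto
    ultimately show "\<exists>m''. reach P (pc + 4, m') 6 (pc + 4, m'') \<and> ?I (Suc k) m''"
      by (blast intro: reach_eq)
  next
    fix m' assume I: "?I n m'"
    have z: "y + 1 - 2^R = 0" using y by simp
    have "(step P ^^ 3) (pc + 4, m') = (pc + 10, m'(g+4 := y + 1 - 2^R))"
      using I g z by (simp add: s blkB_def funpow_numeral funpow_1')
    moreover have "?Q (m'(g+4 := y + 1 - 2^R))" using I g by auto
    ultimately show "\<exists>m''. reach P (pc + 4, m') 3 (pc + 10, m'') \<and> ?Q m''"
      by (blast intro: reach_eq)
  qed (rule I0)
  then obtain m' where "reach P (pc + 4, mem(g := 0, g+1 := 1, g+2 := 0, g+3 := 2^R)) (n * 6 + 3) (pc + 10, m')" "?Q m'"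
    by blast
  with reach_trans[OF reach_eq[OF init]] show ?thesis by blast
qed


definition blkC :: "nat \<Rightarrow> nat \<Rightarrow> nat \<Rightarrow> instr list" where
  "blkC g R pc = [Const (g+5) 0, Add (g+6) (g+2) g,
    Jz (g+6) (pc+6), Add (g+5) (g+5) 0, Sub (g+6) (g+6) (g+1), Jz g (pc+2),
    Const (g+4) (g+R), Add (g+7) (g+5) (g+4)]"

lemma blkC_len[simp]: "length (blkC g R pc) = 8" by (simp add: blkC_def)

lemma phaseC:
  assumes at: "at P pc (blkC g R pc)" and g: "2 \<le> g" and r: "mem g = 0" "mem (g+1) = 1" "mem (g+2) = n" "mem 0 = m"
  shows "\<exists>mem'. reach P (pc, mem) (2 + (n * 4 + 3)) (pc + 8, mem') \<and> mem' (g+5) = n * m \<and> mem' (g+7) = n * m + (g + R) \<and>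
     (\<forall>a. a < g + 4 \<or> g + 8 \<le> a \<longrightarrow> mem' a = mem a)"
proof -
  note s = step_gen'[OF at]
  let ?m0 = "mem(g+5 := 0, g+6 := n)"
  let ?I = "\<lambda>k m'. m' (g+5) = k * m \<and> m' (g+6) = n - k \<and> (\<forall>a. a < g + 4 \<or> g + 8 \<le> a \<longrightarrow> m' a = mem a)"
  let ?Q = "\<lambda>m'. m' (g+5) = n * m \<and> m' (g+7) = n * m + (g + R) \<and> (\<forall>a. a < g + 4 \<or> g + 8 \<le> a \<longrightarrow> m' a = mem a)"
  have init: "(step P ^^ 2) (pc, mem) = (pc + 2, ?m0)"
    using g r by (simp add: s blkC_def funpow_numeral funpow_1')
  have I0: "?I 0 ?m0" using g by simp
  have L: "\<exists>m'. reach P (pc + 2, ?m0) (n * 4 + 3) (pc + 8, m') \<and> ?Q m'"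
  proof (rule loop_rule[where I = ?I])
    fix k m' assume k: "k < n" and I: "?I k m'"
    have fr: "m' 0 = m" "m' g = 0" "m' (g+1) = 1" using I g r by auto
    have nz: "n - k \<noteq> 0" using k by simp
    have "(step P ^^ 4) (pc + 2, m') = (pc + 2, m'(g+5 := k * m + m, g+6 := n - k - 1))"
      using I g nz fr by (simp add: s blkC_def funpow_numeral funpow_1')
    moreover have "?I (Suc k) (m'(g+5 := k * m + m, g+6 := n - k - 1))"
      using I g by auto
    ultimately show "\<exists>m''. reach P (pc + 2, m') 4 (pc + 2, m'') \<and> ?I (Suc k) m''"
      by (blast intro: reach_eq)
  next
    fix m' assume I: "?I n m'"
    have "(step P ^^ 3) (pc + 2, m') = (pc + 8, m'(g+4 := g + R, g+7 := n * m + (g + R)))"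
      using I g by (simp add: s blkC_def funpow_numeral funpow_1')
    moreover have "?Q (m'(g+4 := g + R, g+7 := n * m + (g + R)))" using I g by auto
    ultimately show "\<exists>m''. reach P (pc + 2, m') 3 (pc + 8, m'') \<and> ?Q m''"
      by (blast intro: reach_eq)
  qed (rule I0)
  then obtain m' where "reach P (pc + 2, ?m0) (n * 4 + 3) (pc + 8, m')" "?Q m'"
    by blast
  with reach_trans[OF reach_eq[OF init]] show ?thesis by blast
qed


definition blkD :: "nat \<Rightarrow> nat \<Rightarrow> instr list" where
  "blkD g pc = [Const (g+8) g, Add (g+9) (g+7) g, Add (g+6) (g+5) g,
    Jz (g+6) (pc+10), Load (g+4) (g+8), Store (g+9) (g+4), Add (g+8) (g+8) (g+1), Add (g+9) (g+9) (g+1),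
    Sub (g+6) (g+6) (g+1), Jz g (pc+3)]"

lemma blkD_len[simp]: "length (blkD g pc) = 10" by (simp add: blkD_def)

lemma phaseD:
  assumes at: "at P pc (blkD g pc)" and g: "2 \<le> g" and R: "10 \<le> R"
    and r: "mem g = 0" "mem (g+1) = 1" "mem (g+5) = S" "mem (g+7) = B" and B: "B = S + (g + R)"
  shows "\<exists>mem'. reach P (pc, mem) (3 + (S * 7 + 1)) (pc + 10, mem') \<and>
     (\<forall>i. R \<le> i \<and> i < S \<longrightarrow> mem' (B + i) = mem (g + i)) \<and>
     (\<forall>a. a \<notin> {g+4, g+6, g+8, g+9} \<and> (a < B \<or> B + S \<le> a) \<longrightarrow> mem' a = mem a)"
proof -
  note s = step_gen'[OF at]
  let ?m0 = "mem(g+8 := g, g+9 := B, g+6 := S)"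
  let ?I = "\<lambda>k m'. m' (g+8) = g + k \<and> m' (g+9) = B + k \<and> m' (g+6) = S - k \<and>
     (\<forall>i. R \<le> i \<and> i < k \<longrightarrow> m' (B + i) = mem (g + i)) \<and>
     (\<forall>a. a \<notin> {g+4, g+6, g+8, g+9} \<and> (a < B \<or> B + k \<le> a) \<longrightarrow> m' a = mem a)"
  let ?Q = "\<lambda>m'. (\<forall>i. R \<le> i \<and> i < S \<longrightarrow> m' (B + i) = mem (g + i)) \<and>
     (\<forall>a. a \<notin> {g+4, g+6, g+8, g+9} \<and> (a < B \<or> B + S \<le> a) \<longrightarrow> m' a = mem a)"
  have init: "(step P ^^ 3) (pc, mem) = (pc + 3, ?m0)"
    using g r by (simp add: s blkD_def funpow_numeral funpow_1')
  have I0: "?I 0 ?m0" using g by simp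
  have L: "\<exists>m'. reach P (pc + 3, ?m0) (S * 7 + 1) (pc + 10, m') \<and> ?Q m'"
  proof (rule loop_rule[where I = ?I])
    fix k m' assume k: "k < S" and I: "?I k m'"
    have fr0: "\<And>a. a \<notin> {g+4, g+6, g+8, g+9} \<Longrightarrow> a < B \<Longrightarrow> m' a = mem a" using I by blast
    have fr: "m' g = 0" "m' (g+1) = 1" using fr0[of g] fr0[of "g+1"] g r B R by auto
    have nz: "S - k \<noteq> 0" using k by simp
    have "\<exists>m''. (step P ^^ 7) (pc + 3, m') = (pc + 3, m'') \<and> ?I (Suc k) m''"
      using I g nz fr B R k by (auto simp: s blkD_def funpow_numeral funpow_1' less_Suc_eq)
    thus "\<exists>m''. reach P (pc + 3, m') 7 (pc + 3, m'') \<and> ?I (Suc k) m''"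
      by (blast intro: reach_eq)
  next
    fix m' assume I: "?I S m'"
    have "(step P ^^ 1) (pc + 3, m') = (pc + 10, m')"
      using I g by (simp add: s blkD_def funpow_1')
    thus "\<exists>m''. reach P (pc + 3, m') 1 (pc + 10, m'') \<and> ?Q m''" using I
      by (blast intro: reach_eq)
  qed (rule I0)
  then obtain m' where "reach P (pc + 3, ?m0) (S * 7 + 1) (pc + 10, m')" "?Q m'"
    by blast
  moreover have "?Q m' \<Longrightarrow> ?Q m'" by simp
  ultimately show ?thesis using reach_trans[OF reach_eq[OF init]] by blast
qed


definition eblk :: "nat \<Rightarrow> nat \<Rightarrow> nat \<Rightarrow> nat \<Rightarrow> instr list" where
  "eblk g R pc j = [Const (g+3) (2^(R-1-j)), Add (g+4) 1 (g+1), Sub (g+4) (g+4) (g+3),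
    Const (g+10) j, Add (g+9) (g+7) (g+10), Jz (g+4) (pc+9), Sub 1 1 (g+3), Store (g+9) (g+1),
    Jz g (pc+10), Store (g+9) g]"

lemma eblk_len[simp]: "length (eblk g R pc j) = 10" by (simp add: eblk_def)

lemma eblk_spec:
  assumes at: "at P pc (eblk g R pc j)" and g: "2 \<le> g" and R: "11 \<le> R"
    and r: "mem g = 0" "mem (g+1) = 1" "mem (g+7) = B" "mem 1 = tlv b R j" and B: "g + R \<le> B"
    and b: "\<And>i. b i \<le> 1" and j: "j < R"
  shows "\<exists>mem'. reach P (pc, mem) 9 (pc + 10, mem') \<and> mem' 1 = tlv b R (Suc j) \<and> mem' (B + j) = b j \<and>
     (\<forall>a. a \<notin> {1, g+3, g+4, g+9, g+10, B + j} \<longrightarrow> mem' a = mem a)"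
proof -
  note s = step_gen'[OF at]
  have sp: "tlv b R j = b j * 2^(R-1-j) + tlv b R (Suc j)" using tl_split[OF j] .
  have bd: "tlv b R (Suc j) < 2^(R-1-j)" using tl_bound[of b R "Suc j", OF b] by simp
  show ?thesis
  proof (cases "b j = 0")
    case True
    hence z: "tlv b R j + 1 - 2^(R-1-j) = 0" using sp bd by simp
    have "\<exists>m'. (step P ^^ 7) (pc, mem) = (pc + 10, m') \<and> m' 1 = tlv b R (Suc j) \<and> m' (B + j) = b j \<and>
     (\<forall>a. a \<notin> {1, g+3, g+4, g+9, g+10, B + j} \<longrightarrow> m' a = mem a)"
      using g r z True sp B R by (auto simp: s eblk_def funpow_numeral funpow_1')
    then obtain m' where "(step P ^^ 7) (pc, mem) = (pc + 10, m')" "m' 1 = tlv b R (Suc j)" "m' (B + j) = b j"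
     "\<forall>a. a \<notin> {1, g+3, g+4, g+9, g+10, B + j} \<longrightarrow> m' a = mem a" by blast
    moreover have "reach P (pc, mem) 9 (pc + 10, m')" using reach_eqI[OF calculation(1)] by simp
    ultimately show ?thesis by blast
  next
    case False
    hence b1: "b j = 1" using b[of j] by simp
    hence nz: "tlv b R j + 1 - 2^(R-1-j) \<noteq> 0" using sp by simp
    have sb: "tlv b R j - 2^(R-1-j) = tlv b R (Suc j)" using sp b1 by simp
    have "\<exists>m'. (step P ^^ 9) (pc, mem) = (pc + 10, m') \<and> m' 1 = tlv b R (Suc j) \<and> m' (B + j) = b j \<and>
     (\<forall>a. a \<notin> {1, g+3, g+4, g+9, g+10, B + j} \<longrightarrow> m' a = mem a)"
      using g r nz b1 sb B R by (auto simp: s eblk_def funpow_numeral funpow_1')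
    thus ?thesis by (blast intro: reach_eqI)
  qed
qed

primrec blkE :: "nat \<Rightarrow> nat \<Rightarrow> nat \<Rightarrow> nat \<Rightarrow> instr list" where
  "blkE g R pc 0 = []"
| "blkE g R pc (Suc J) = blkE g R pc J @ eblk g R (pc + 10 * J) J"

lemma blkE_len[simp]: "length (blkE g R pc J) = 10 * J"
  by (induction J) auto

lemma phaseE_gen:
  assumes at: "at P pc (blkE g R pc J)" and g: "2 \<le> g" and R: "11 \<le> R"
    and r: "mem g = 0" "mem (g+1) = 1" "mem (g+7) = B" "mem 1 = tlv b R 0" and B: "g + R \<le> B"
    and b: "\<And>i. b i \<le> 1" and J: "J \<le> R"
  shows "\<exists>mem'. reach P (pc, mem) (9 * J) (pc + 10 * J, mem') \<and> mem' 1 = tlv b R J \<and> (\<forall>i<J. mem' (B + i) = b i) \<and>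
     (\<forall>a. a \<notin> {1, g+3, g+4, g+9, g+10} \<and> \<not> (B \<le> a \<and> a < B + J) \<longrightarrow> mem' a = mem a)"
  using at J
proof (induction J)
  case 0
  then show ?case using r by (auto intro: reach_refl)
next
  case (Suc J)
  have a1: "at P pc (blkE g R pc J)" and a2: "at P (pc + 10 * J) (eblk g R (pc + 10 * J) J)"
    using Suc.prems(1) by (simp_all add: at_append)
  obtain m1 where m1: "reach P (pc, mem) (9 * J) (pc + 10 * J, m1)" "m1 1 = tlv b R J" "\<forall>i<J. m1 (B + i) = b i"
     "\<forall>a. a \<notin> {1, g+3, g+4, g+9, g+10} \<and> \<not> (B \<le> a \<and> a < B + J) \<longrightarrow> m1 a = mem a"
    using Suc.IH[OF a1] Suc.prems(2) by auto
  have rr: "m1 g = 0" "m1 (g+1) = 1" "m1 (g+7) = B" using m1(4) r B R g by auto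
  obtain m2 where m2: "reach P (pc + 10 * J, m1) 9 (pc + 10 * J + 10, m2)" "m2 1 = tlv b R (Suc J)" "m2 (B + J) = b J"
     "\<forall>a. a \<notin> {1, g+3, g+4, g+9, g+10, B + J} \<longrightarrow> m2 a = m1 a"
    using eblk_spec[OF a2 g R rr m1(2) B b] Suc.prems(2) by auto
  have "reach P (pc, mem) (9 * Suc J) (pc + 10 * Suc J, m2)"
    using reach_trans[OF m1(1) m2(1)] by (simp add: add_ac)
  moreover have "\<forall>i<Suc J. m2 (B + i) = b i" using m1(3) m2(3,4) B R g by (auto simp: less_Suc_eq)
  moreover have "\<forall>a. a \<notin> {1, g+3, g+4, g+9, g+10} \<and> \<not> (B \<le> a \<and> a < B + Suc J) \<longrightarrow> m2 a = mem a"
    using m1(4) m2(4) by auto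
  ultimately show ?case using m2(2) by blast
qed


definition blkF :: "nat \<Rightarrow> nat \<Rightarrow> nat \<Rightarrow> instr list" where
  "blkF g R pc = [Add (g+4) (g+7) (g+5), Const (g+11) R, Add (g+12) (g+4) (g+11),
    Add (g+13) (g+7) g, Add (g+14) (g+12) g, Add (g+15) 0 g,
    Jz (g+15) (pc+21), Add (g+16) (g+13) g, Const (g+17) 0, Add (g+18) (g+2) g,
    Jz (g+18) (pc+16), Load (g+4) (g+16), Add (g+17) (g+17) (g+4), Add (g+16) (g+16) 0,
    Sub (g+18) (g+18) (g+1), Jz g (pc+10),
    Store (g+14) (g+17), Add (g+13) (g+13) (g+1), Add (g+14) (g+14) (g+1), Sub (g+15) (g+15) (g+1),
    Jz g (pc+6)]"

lemma blkF_len[simp]: "length (blkF g R pc) = 21" by (simp add: blkF_def)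

definition colsum :: "(nat \<Rightarrow> nat) \<Rightarrow> nat \<Rightarrow> nat \<Rightarrow> nat \<Rightarrow> nat \<Rightarrow> nat \<Rightarrow> nat" where
  "colsum mem B m n i c = (\<Sum>i'<i. mem (B + i' * m + c))"

lemma idx_bound: "c < m \<Longrightarrow> i < n \<Longrightarrow> c + i * m < n * (m::nat)"
proof -
  assume "c < m" "i < n"
  hence "c + i * m < m + i * m" by simp
  also have "\<dots> = Suc i * m" by simp
  also have "\<dots> \<le> n * m" using \<open>i < n\<close> by (intro mult_right_mono) auto
  finally show ?thesis .
qed

lemma phaseF:
  assumes at: "at P pc (blkF g R pc)" and g: "2 \<le> g" and R: "19 \<le> R"
    and r: "mem g = 0" "mem (g+1) = 1" "mem (g+2) = n" "mem 0 = m" "mem (g+5) = n * m" "mem (g+7) = B"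
    and B: "g + R \<le> B" and Cb: "Cb = B + n * m + R"
  shows "\<exists>mem'. reach P (pc, mem) (6 + (m * (6 * n + 10) + 1)) (pc + 21, mem') \<and> mem' (g+12) = Cb \<and>
     (\<forall>c<m. mem' (Cb + c) = colsum mem B m n n c) \<and>
     (\<forall>a. (a < g + 4 \<or> (g + 19 \<le> a \<and> a < Cb) \<or> Cb + m \<le> a \<or> a \<in> {g+5, g+6, g+7, g+8, g+9, g+10}) \<longrightarrow> mem' a = mem a)"
proof -
  note s = step_gen'[OF at]
  define fr where "fr = (\<lambda>a. a < g + 4 \<or> (g + 19 \<le> a \<and> a < Cb) \<or> a \<in> {g+5, g+6, g+7, g+8, g+9, g+10})"
  have frg: "fr g" "fr (g+1)" "fr (g+2)" "fr 0" "fr (g+5)" "fr (g+7)" using g by (auto simp: fr_def)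
  have frM: "fr (B + i * m + c)" if "c < m" "i < n" for i c
    using idx_bound[OF that] B R Cb unfolding fr_def by auto
  let ?m0 = "mem(g+4 := B + n * m, g+11 := R, g+12 := Cb, g+13 := B, g+14 := Cb, g+15 := m)"
  let ?I = "\<lambda>c m'. m' (g+12) = Cb \<and> m' (g+13) = B + c \<and> m' (g+14) = Cb + c \<and> m' (g+15) = m - c \<and>
     (\<forall>c'<c. m' (Cb + c') = colsum mem B m n n c') \<and>
     (\<forall>a. (fr a \<or> Cb + c \<le> a) \<longrightarrow> m' a = mem a)"
  let ?Q = "\<lambda>m'. m' (g+12) = Cb \<and> (\<forall>c<m. m' (Cb + c) = colsum mem B m n n c) \<and>
     (\<forall>a. (fr a \<or> Cb + m \<le> a) \<longrightarrow> m' a = mem a)"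
  have init: "(step P ^^ 6) (pc, mem) = (pc + 6, ?m0)"
    using g r Cb by (simp add: s blkF_def funpow_numeral funpow_1')
  have I0: "?I 0 ?m0" using g Cb B R by (simp add: fr_def)
  have L: "\<exists>m'. reach P (pc + 6, ?m0) (m * (6 * n + 10) + 1) (pc + 21, m') \<and> ?Q m'"
  proof (rule loop_rule[where I = ?I])
    fix c mo assume c: "c < m" and I: "?I c mo"
    have fro: "\<And>a. fr a \<Longrightarrow> mo a = mem a" using I by blast
    have rr: "mo g = 0" "mo (g+1) = 1" "mo (g+2) = n" "mo 0 = m" using fro frg r by auto
    have nz: "m - c \<noteq> 0" using c by simp
    let ?m1 = "mo(g+16 := B + c, g+17 := 0, g+18 := n)"
    have st1: "(step P ^^ 4) (pc + 6, mo) = (pc + 10, ?m1)"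
      using I g nz rr by (simp add: s blkF_def funpow_numeral funpow_1')
    let ?J = "\<lambda>i m'. m' (g+16) = B + c + i * m \<and> m' (g+17) = colsum mem B m n i c \<and> m' (g+18) = n - i \<and>
        (\<forall>a. a \<notin> {g+4, g+16, g+17, g+18} \<longrightarrow> m' a = mo a)"
    have J0: "?J 0 ?m1" by (simp add: colsum_def)
    have L2: "\<exists>m'. reach P (pc + 10, ?m1) (n * 6 + 6) (pc + 6, m') \<and> ?I (Suc c) m'"
    proof (rule loop_rule[where I = ?J])
      fix i mi assume i: "i < n" and J: "?J i mi"
      have fri: "\<And>a. a \<notin> {g+4, g+16, g+17, g+18} \<Longrightarrow> mi a = mo a" using J by blast
      have ri: "mi g = 0" "mi (g+1) = 1" "mi 0 = m" using fri rr g by auto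
      have ld: "mi (B + c + i * m) = mem (B + i * m + c)"
        using fri[of "B + c + i * m"] fro[OF frM[OF c i]] B R by (simp add: add_ac)
      have nz2: "n - i \<noteq> 0" using i by simp
      have cs: "colsum mem B m n (Suc i) c = colsum mem B m n i c + mem (B + i * m + c)"
        by (simp add: colsum_def)
      have "\<exists>m''. (step P ^^ 6) (pc + 10, mi) = (pc + 10, m'') \<and> ?J (Suc i) m''"
        using J g nz2 ri ld cs by (simp add: s blkF_def funpow_numeral funpow_1')
      thus "\<exists>m''. reach P (pc + 10, mi) 6 (pc + 10, m'') \<and> ?J (Suc i) m''"
        by (blast intro: reach_eq)
    next
      fix mi assume J: "?J n mi"
      have fri: "\<And>a. a \<notin> {g+4, g+16, g+17, g+18} \<Longrightarrow> mi a = mo a" using J by blast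
      have ri: "mi g = 0" "mi (g+1) = 1" "mi (g+13) = B + c" "mi (g+14) = Cb + c" "mi (g+15) = m - c" "mi (g+12) = Cb"
        using fri rr g I by auto
      have cb: "g \<noteq> Cb + c" "g + 1 \<noteq> Cb + c" "g+13 \<noteq> Cb + c" "g+14 \<noteq> Cb + c" "g+15 \<noteq> Cb + c"
         "Cb + c \<noteq> g" "Cb + c \<noteq> g+1" "Cb + c \<noteq> g+13" "Cb + c \<noteq> g+14" "Cb + c \<noteq> g+15" using Cb B R by auto
      have z: "mi (g+18) = 0" "mi (g+17) = colsum mem B m n n c" using J by simp_all
      have ex: "(step P ^^ 6) (pc + 10, mi) = (pc + 6, mi(Cb + c := colsum mem B m n n c, g+13 := B + c + 1, g+14 := Cb + c + 1, g+15 := m - c - 1))"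
        using g ri z cb by (simp add: s blkF_def funpow_numeral funpow_1')
      have bigC: "g + 19 \<le> Cb" using Cb B R by simp
      have "?I (Suc c) (mi(Cb + c := colsum mem B m n n c, g+13 := B + c + 1, g+14 := Cb + c + 1, g+15 := m - c - 1))"
      proof (intro conjI allI impI)
        fix c' assume c': "c' < Suc c"
        show "(mi(Cb + c := colsum mem B m n n c, g+13 := B + c + 1, g+14 := Cb + c + 1, g+15 := m - c - 1)) (Cb + c') = colsum mem B m n n c'"
        proof (cases "c' = c")
          case True thus ?thesis using cb by simp
        next
          case False
          hence "c' < c" using c' by simp
          moreover have "mi (Cb + c') = mo (Cb + c')" using fri[of "Cb + c'"] bigC by auto
          ultimately show ?thesis using I bigC False by auto
        qed
      next
        fix a assume a: "fr a \<or> Cb + Suc c \<le> a"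
        have a1: "a \<noteq> Cb + c" "a \<noteq> g+13" "a \<noteq> g+14" "a \<noteq> g+15"
          using a bigC unfolding fr_def by auto
        have "mi a = mo a" using fri[of a] a bigC unfolding fr_def by auto
        moreover have "mo a = mem a" using I a by auto
        ultimately show "(mi(Cb + c := colsum mem B m n n c, g+13 := B + c + 1, g+14 := Cb + c + 1, g+15 := m - c - 1)) a = mem a"
          using a1 by simp
      qed (use ri bigC in simp_all)
      hence "\<exists>m''. (step P ^^ 6) (pc + 10, mi) = (pc + 6, m'') \<and> ?I (Suc c) m''" using ex by blast
      thus "\<exists>m''. reach P (pc + 10, mi) 6 (pc + 6, m'') \<and> ?I (Suc c) m''"
        by (blast intro: reach_eq)
    qed (rule J0)
    then obtain m2 where m2: "reach P (pc + 10, ?m1) (n * 6 + 6) (pc + 6, m2)" "?I (Suc c) m2" by blast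
    have "reach P (pc + 6, mo) (4 + (n * 6 + 6)) (pc + 6, m2)" using reach_trans[OF reach_eq[OF st1] m2(1)] .
    moreover have "4 + (n * 6 + 6) = 6 * n + 10" by simp
    ultimately show "\<exists>m''. reach P (pc + 6, mo) (6 * n + 10) (pc + 6, m'') \<and> ?I (Suc c) m''"
      using m2(2) by auto
  next
    fix m' assume I: "?I m m'"
    have "(step P ^^ 1) (pc + 6, m') = (pc + 21, m')"
      using I g by (simp add: s blkF_def funpow_1')
    thus "\<exists>m''. reach P (pc + 6, m') 1 (pc + 21, m'') \<and> ?Q m''" using I
      by (blast intro: reach_eq)
  qed (rule I0)
  then obtain m' where "reach P (pc + 6, ?m0) (m * (6 * n + 10) + 1) (pc + 21, m')" "?Q m'"
    by blast
  moreover have "\<forall>a. (a < g + 4 \<or> (g + 19 \<le> a \<and> a < Cb) \<or> Cb + m \<le> a \<or> a \<in> {g+5, g+6, g+7, g+8, g+9, g+10}) \<longrightarrow> m' a = mem a"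
    using calculation(2) unfolding fr_def by blast
  ultimately show ?thesis using reach_trans[OF reach_eq[OF init]] by blast
qed


definition blkG1 :: "nat \<Rightarrow> nat \<Rightarrow> instr list" where
  "blkG1 g pc = [Add (g+21) (g+12) 0, Add (g+14) (g+12) g, Add (g+17) (g+21) g, Add (g+15) 0 g, Jz (g+15) (pc+16), Load (g+4) (g+14), Add (g+4) (g+4) (g+4), Sub (g+4) (g+4) (g+2), Jz (g+4) (pc+11), Store (g+17) (g+1), Jz g (pc+12), Store (g+17) g, Add (g+14) (g+14) (g+1), Add (g+17) (g+17) (g+1), Sub (g+15) (g+15) (g+1), Jz g (pc+4), Add (g+22) 0 g]"

lemma blkG1_len[simp]: "length (blkG1 g pc) = 17" by (simp add: blkG1_def)

lemma blkG1_s0: "at P pc (blkG1 g pc) \<Longrightarrow> step P (pc, mem) = (Suc pc, mem((g+21) := mem (g+12) + mem 0))"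
  using step_gen[of P pc "blkG1 g pc" 0 mem] by (simp add: blkG1_def)

lemma blkG1_s1: "at P pc (blkG1 g pc) \<Longrightarrow> step P (Suc pc, mem) = (Suc (Suc pc), mem((g+14) := mem (g+12) + mem g))"
  using step_gen[of P pc "blkG1 g pc" 1 mem] by (simp add: blkG1_def)

lemma blkG1_s2: "at P pc (blkG1 g pc) \<Longrightarrow> step P (Suc (Suc pc), mem) = (pc + 3, mem((g+17) := mem (g+21) + mem g))"
  using step_gen[of P pc "blkG1 g pc" 2 mem] by (simp add: blkG1_def)

lemma blkG1_s3: "at P pc (blkG1 g pc) \<Longrightarrow> step P (pc + 3, mem) = (pc + 4, mem((g+15) := mem 0 + mem g))"
  using step_gen[of P pc "blkG1 g pc" 3 mem] by (simp add: blkG1_def)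

lemma blkG1_s4: "at P pc (blkG1 g pc) \<Longrightarrow> step P (pc + 4, mem) = (if mem (g+15) = 0 then (pc+16) else pc + 5, mem)"
  using step_gen[of P pc "blkG1 g pc" 4 mem] by (simp add: blkG1_def)

lemma blkG1_s5: "at P pc (blkG1 g pc) \<Longrightarrow> step P (pc + 5, mem) = (pc + 6, mem((g+4) := mem (mem (g+14))))"
  using step_gen[of P pc "blkG1 g pc" 5 mem] by (simp add: blkG1_def)

lemma blkG1_s6: "at P pc (blkG1 g pc) \<Longrightarrow> step P (pc + 6, mem) = (pc + 7, mem((g+4) := mem (g+4) + mem (g+4)))"
  using step_gen[of P pc "blkG1 g pc" 6 mem] by (simp add: blkG1_def)

lemma blkG1_s7: "at P pc (blkG1 g pc) \<Longrightarrow> step P (pc + 7, mem) = (pc + 8, mem((g+4) := mem (g+4) - mem (g+2)))"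
  using step_gen[of P pc "blkG1 g pc" 7 mem] by (simp add: blkG1_def)

lemma blkG1_s8: "at P pc (blkG1 g pc) \<Longrightarrow> step P (pc + 8, mem) = (if mem (g+4) = 0 then (pc+11) else pc + 9, mem)"
  using step_gen[of P pc "blkG1 g pc" 8 mem] by (simp add: blkG1_def)

lemma blkG1_s9: "at P pc (blkG1 g pc) \<Longrightarrow> step P (pc + 9, mem) = (pc + 10, mem(mem (g+17) := mem (g+1)))"
  using step_gen[of P pc "blkG1 g pc" 9 mem] by (simp add: blkG1_def)

lemma blkG1_s10: "at P pc (blkG1 g pc) \<Longrightarrow> step P (pc + 10, mem) = (if mem g = 0 then (pc+12) else pc + 11, mem)"
  using step_gen[of P pc "blkG1 g pc" 10 mem] by (simp add: blkG1_def)

lemma blkG1_s11: "at P pc (blkG1 g pc) \<Longrightarrow> step P (pc + 11, mem) = (pc + 12, mem(mem (g+17) := mem g))"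
  using step_gen[of P pc "blkG1 g pc" 11 mem] by (simp add: blkG1_def)

lemma blkG1_s12: "at P pc (blkG1 g pc) \<Longrightarrow> step P (pc + 12, mem) = (pc + 13, mem((g+14) := mem (g+14) + mem (g+1)))"
  using step_gen[of P pc "blkG1 g pc" 12 mem] by (simp add: blkG1_def)

lemma blkG1_s13: "at P pc (blkG1 g pc) \<Longrightarrow> step P (pc + 13, mem) = (pc + 14, mem((g+17) := mem (g+17) + mem (g+1)))"
  using step_gen[of P pc "blkG1 g pc" 13 mem] by (simp add: blkG1_def)

lemma blkG1_s14: "at P pc (blkG1 g pc) \<Longrightarrow> step P (pc + 14, mem) = (pc + 15, mem((g+15) := mem (g+15) - mem (g+1)))"
  using step_gen[of P pc "blkG1 g pc" 14 mem] by (simp add: blkG1_def)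

lemma blkG1_s15: "at P pc (blkG1 g pc) \<Longrightarrow> step P (pc + 15, mem) = (if mem g = 0 then (pc+4) else pc + 16, mem)"
  using step_gen[of P pc "blkG1 g pc" 15 mem] by (simp add: blkG1_def)

lemma blkG1_s16: "at P pc (blkG1 g pc) \<Longrightarrow> step P (pc + 16, mem) = (pc + 17, mem((g+22) := mem 0 + mem g))"
  using step_gen[of P pc "blkG1 g pc" 16 mem] by (simp add: blkG1_def)

lemmas blkG1_steps = blkG1_s0 blkG1_s1 blkG1_s2 blkG1_s3 blkG1_s4 blkG1_s5 blkG1_s6 blkG1_s7 blkG1_s8 blkG1_s9 blkG1_s10 blkG1_s11 blkG1_s12 blkG1_s13 blkG1_s14 blkG1_s15 blkG1_s16


lemma G1_init:
  assumes at: "at P pc (blkG1 g pc)" and g: "2 \<le> g" and r: "mem g = 0" "mem 0 = m" "mem (g+12) = Cb"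
  shows "(step P ^^ 4) (pc, mem) = (pc + 4, mem(g+21 := Cb + m, g+14 := Cb, g+17 := Cb + m, g+15 := m))"
  using g r by (simp add: blkG1_steps[OF at] funpow_numeral funpow_1')

lemma G1_exit:
  assumes at: "at P pc (blkG1 g pc)" and g: "2 \<le> g" and r: "mem g = 0" "mem 0 = m" "mem (g+15) = 0"
  shows "(step P ^^ 2) (pc + 4, mem) = (pc + 17, mem(g+22 := m))"
  using g r by (simp add: blkG1_steps[OF at] funpow_numeral funpow_1')


lemma G1_ns:
  assumes at: "at P pc (blkG1 g pc)" and g: "2 \<le> g"
  and rr: "mo g = 0" "mo (g+1) = 1" "mo (g+2) = n"
  and rc: "mo (g+14) = x" "mo (g+17) = a" "mo (g+15) = k" and nz: "k \<noteq> 0"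
  and ne: "g \<noteq> a" "g + 1 \<noteq> a" "g+2 \<noteq> a" "g+4 \<noteq> a" "g+14 \<noteq> a" "g+15 \<noteq> a" "g+17 \<noteq> a"
         "a \<noteq> g" "a \<noteq> g+1" "a \<noteq> g+2" "a \<noteq> g+4" "a \<noteq> g+14" "a \<noteq> g+15" "a \<noteq> g+17" "x \<noteq> g+4"
  and t: "mo x + mo x - n = 0"
  shows "(step P ^^ 10) (pc + 4, mo) = (pc + 4, mo(g + 4 := 0, a := 0, g + 14 := Suc x,
              g + 17 := Suc a, g + 15 := k - 1))"
  using g rr rc nz t ne by (simp add: blkG1_steps[OF at] funpow_numeral funpow_1')

lemma G1_st:
  assumes at: "at P pc (blkG1 g pc)" and g: "2 \<le> g"
  and rr: "mo g = 0" "mo (g+1) = 1" "mo (g+2) = n"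
  and rc: "mo (g+14) = x" "mo (g+17) = a" "mo (g+15) = k" and nz: "k \<noteq> 0"
  and ne: "g \<noteq> a" "g + 1 \<noteq> a" "g+2 \<noteq> a" "g+4 \<noteq> a" "g+14 \<noteq> a" "g+15 \<noteq> a" "g+17 \<noteq> a"
         "a \<noteq> g" "a \<noteq> g+1" "a \<noteq> g+2" "a \<noteq> g+4" "a \<noteq> g+14" "a \<noteq> g+15" "a \<noteq> g+17" "x \<noteq> g+4"
  and t: "mo x + mo x - n \<noteq> 0"
  shows "(step P ^^ 11) (pc + 4, mo) = (pc + 4, mo(g + 4 := mo x + mo x - n, a := 1, g + 14 := Suc x,
              g + 17 := Suc a, g + 15 := k - 1))"
  using g rr rc nz t ne by (simp add: blkG1_steps[OF at] funpow_numeral funpow_1')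

lemma phaseG1:
  assumes at: "at P pc (blkG1 g pc)" and g: "2 \<le> g"
    and r: "mem g = 0" "mem (g+1) = 1" "mem (g+2) = n" "mem 0 = m" "mem (g+12) = Cb"
    and Cb: "g + 23 \<le> Cb"
  shows "\<exists>mem'. reach P (pc, mem) (4 + (m * 11 + 2)) (pc + 17, mem') \<and> mem' (g+21) = Cb + m \<and> mem' (g+22) = m \<and>
     (\<forall>c<m. mem' (Cb + m + c) = (if n < 2 * mem (Cb + c) then 1 else 0)) \<and>
     (\<forall>a. a \<notin> {g+4, g+14, g+15, g+17, g+21, g+22} \<and> a < Cb + m \<longrightarrow> mem' a = mem a)"
proof -
  define fr where "fr = (\<lambda>a. a \<notin> {g+4, g+14, g+15, g+17, g+21, g+22} \<and> a < Cb + m)"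
  let ?m0 = "mem(g+21 := Cb + m, g+14 := Cb, g+17 := Cb + m, g+15 := m)"
  let ?I = "\<lambda>c m'. m' (g+21) = Cb + m \<and> m' (g+14) = Cb + c \<and> m' (g+17) = Cb + m + c \<and> m' (g+15) = m - c \<and>
     (\<forall>c'<c. m' (Cb + m + c') = (if n < 2 * mem (Cb + c') then 1 else 0)) \<and>
     (\<forall>a. (fr a \<or> Cb + m + c \<le> a) \<longrightarrow> m' a = mem a)"
  let ?Q = "\<lambda>m'. m' (g+21) = Cb + m \<and> m' (g+22) = m \<and>
     (\<forall>c<m. m' (Cb + m + c) = (if n < 2 * mem (Cb + c) then 1 else 0)) \<and>
     (\<forall>a. fr a \<longrightarrow> m' a = mem a)"
  have init: "(step P ^^ 4) (pc, mem) = (pc + 4, ?m0)"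
    using G1_init[OF at g r(1) r(4) r(5)] .
  have I0: "?I 0 ?m0" using g Cb by (auto simp: fr_def)
  have L: "\<exists>m'. reach P (pc + 4, ?m0) (m * 11 + 2) (pc + 17, m') \<and> ?Q m'"
  proof (rule loop_rule[where I = ?I])
    fix c mo assume c: "c < m" and I: "?I c mo"
    have fro: "\<And>a. fr a \<Longrightarrow> mo a = mem a" using I by blast
    have rr: "mo g = 0" "mo (g+1) = 1" "mo (g+2) = n"
      using fro[of g] fro[of "g+1"] fro[of "g+2"] r g Cb by (auto simp: fr_def)
    have rc: "mo (g+14) = Cb + c" "mo (g+17) = Cb + m + c" "mo (g+15) = m - c" using I by auto
    have cnt: "mo (Cb + c) = mem (Cb + c)" using fro[of "Cb + c"] c Cb by (auto simp: fr_def)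
    have nz: "m - c \<noteq> 0" using c by simp
    have ne: "g \<noteq> Cb + m + c" "g + 1 \<noteq> Cb + m + c" "g+2 \<noteq> Cb + m + c" "g+4 \<noteq> Cb + m + c" "g+14 \<noteq> Cb + m + c"
         "g+15 \<noteq> Cb + m + c" "g+17 \<noteq> Cb + m + c"
         "Cb + m + c \<noteq> g" "Cb + m + c \<noteq> g+1" "Cb + m + c \<noteq> g+2" "Cb + m + c \<noteq> g+4" "Cb + m + c \<noteq> g+14"
         "Cb + m + c \<noteq> g+15" "Cb + m + c \<noteq> g+17" "Cb + c \<noteq> g+4" using Cb by auto
    define v where "v = (if n < 2 * mem (Cb + c) then 1 else (0::nat))"
    obtain xx where ex: "reach P (pc + 4, mo) 11 (pc + 4, mo(g + 4 := xx, Cb + m + c := v, g + 14 := Suc (Cb + c),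
              g + 17 := Suc (Cb + m + c), g + 15 := m - c - 1))"
    proof (cases "n < 2 * mem (Cb + c)")
      case True
      hence t: "mo (Cb + c) + mo (Cb + c) - n \<noteq> 0" using cnt by simp
      have "reach P (pc + 4, mo) 11 (pc + 4, mo(g + 4 := mo (Cb + c) + mo (Cb + c) - n, Cb + m + c := 1, g + 14 := Suc (Cb + c),
              g + 17 := Suc (Cb + m + c), g + 15 := m - c - 1))"
        using reach_eq[OF G1_st[OF at g rr rc(1,2,3) nz ne t]] by simp
      then show ?thesis using that True by (simp add: v_def)
    next
      case False
      hence t: "mo (Cb + c) + mo (Cb + c) - n = 0" using cnt by simp
      have "reach P (pc + 4, mo) 11 (pc + 4, mo(g + 4 := 0, Cb + m + c := 0, g + 14 := Suc (Cb + c),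
              g + 17 := Suc (Cb + m + c), g + 15 := m - c - 1))"
        using reach_eqI[OF G1_ns[OF at g rr rc(1,2,3) nz ne t]] by simp
      then show ?thesis using that False by (simp add: v_def)
    qed
    let ?m2 = "mo(g + 4 := xx, Cb + m + c := v, g + 14 := Suc (Cb + c), g + 17 := Suc (Cb + m + c), g + 15 := m - c - 1)"
    have fr2: "\<And>a. a \<notin> {g+4, g+14, g+15, g+17, Cb + m + c} \<Longrightarrow> ?m2 a = mo a" by auto
    have "?I (Suc c) ?m2"
    proof (intro conjI allI impI)
      show "?m2 (g+21) = Cb + m" using I Cb by simp
      show "?m2 (g+14) = Cb + Suc c" "?m2 (g+17) = Cb + m + Suc c" "?m2 (g+15) = m - Suc c" by simp_all
      fix c' assume c': "c' < Suc c"
      show "?m2 (Cb + m + c') = (if n < 2 * mem (Cb + c') then 1 else 0)"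
      proof (cases "c' = c")
        case True thus ?thesis using ne by (simp add: v_def)
      next
        case False
        hence "c' < c" using c' by simp
        moreover have "?m2 (Cb + m + c') = mo (Cb + m + c')" using False Cb by (intro fr2) auto
        ultimately show ?thesis using I by auto
      qed
    next
      fix a assume a: "fr a \<or> Cb + m + Suc c \<le> a"
      have "a \<notin> {g+4, g+14, g+15, g+17, Cb + m + c}" using a Cb unfolding fr_def by auto
      hence "?m2 a = mo a" by (rule fr2)
      thus "?m2 a = mem a" using I a by auto
    qed
    thus "\<exists>m''. reach P (pc + 4, mo) 11 (pc + 4, m'') \<and> ?I (Suc c) m''" using ex by blast
  next
    fix m' assume I: "?I m m'"
    have fr0: "m' 0 = m" "m' g = 0" using I r g Cb by (auto simp: fr_def)
    have "(step P ^^ 2) (pc + 4, m') = (pc + 17, m'(g+22 := m))"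
      using G1_exit[OF at g fr0(2) fr0(1)] I by simp
    moreover have "?Q (m'(g+22 := m))" using I Cb by (auto simp: fr_def)
    ultimately show "\<exists>m''. reach P (pc + 4, m') 2 (pc + 17, m'') \<and> ?Q m''"
      by (blast intro: reach_eq)
  qed (rule I0)
  then obtain m' where "reach P (pc + 4, ?m0) (m * 11 + 2) (pc + 17, m')" "?Q m'"
    by blast
  moreover have "\<forall>a. a \<notin> {g+4, g+14, g+15, g+17, g+21, g+22} \<and> a < Cb + m \<longrightarrow> m' a = mem a"
    using calculation(2) unfolding fr_def by blast
  ultimately show ?thesis using reach_trans[OF reach_eq[OF init]] by blast
qed


definition blkH1 :: "nat \<Rightarrow> nat \<Rightarrow> instr list" where
  "blkH1 g pc = [Add (g+21) (g+12) 0, Add (g+14) (g+12) g, Add (g+15) 0 g, Const (g+18) 0, Jz (g+15) (pc+13), Load (g+4) (g+14), Add (g+4) (g+4) (g+4), Sub (g+4) (g+4) (g+2), Jz (g+4) (pc+10), Add (g+18) (g+18) (g+1), Add (g+14) (g+14) (g+1), Sub (g+15) (g+15) (g+1), Jz g (pc+4)]"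

lemma blkH1_len[simp]: "length (blkH1 g pc) = 13" by (simp add: blkH1_def)

lemma blkH1_s0: "at P pc (blkH1 g pc) \<Longrightarrow> step P (pc, mem) = (Suc pc, mem((g+21) := mem (g+12) + mem 0))"
  using step_gen[of P pc "blkH1 g pc" 0 mem] by (simp add: blkH1_def)

lemma blkH1_s1: "at P pc (blkH1 g pc) \<Longrightarrow> step P (Suc pc, mem) = (Suc (Suc pc), mem((g+14) := mem (g+12) + mem g))"
  using step_gen[of P pc "blkH1 g pc" 1 mem] by (simp add: blkH1_def)

lemma blkH1_s2: "at P pc (blkH1 g pc) \<Longrightarrow> step P (Suc (Suc pc), mem) = (pc + 3, mem((g+15) := mem 0 + mem g))"
  using step_gen[of P pc "blkH1 g pc" 2 mem] by (simp add: blkH1_def)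

lemma blkH1_s3: "at P pc (blkH1 g pc) \<Longrightarrow> step P (pc + 3, mem) = (pc + 4, mem((g+18) := 0))"
  using step_gen[of P pc "blkH1 g pc" 3 mem] by (simp add: blkH1_def)

lemma blkH1_s4: "at P pc (blkH1 g pc) \<Longrightarrow> step P (pc + 4, mem) = (if mem (g+15) = 0 then (pc+13) else pc + 5, mem)"
  using step_gen[of P pc "blkH1 g pc" 4 mem] by (simp add: blkH1_def)

lemma blkH1_s5: "at P pc (blkH1 g pc) \<Longrightarrow> step P (pc + 5, mem) = (pc + 6, mem((g+4) := mem (mem (g+14))))"
  using step_gen[of P pc "blkH1 g pc" 5 mem] by (simp add: blkH1_def)

lemma blkH1_s6: "at P pc (blkH1 g pc) \<Longrightarrow> step P (pc + 6, mem) = (pc + 7, mem((g+4) := mem (g+4) + mem (g+4)))"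
  using step_gen[of P pc "blkH1 g pc" 6 mem] by (simp add: blkH1_def)

lemma blkH1_s7: "at P pc (blkH1 g pc) \<Longrightarrow> step P (pc + 7, mem) = (pc + 8, mem((g+4) := mem (g+4) - mem (g+2)))"
  using step_gen[of P pc "blkH1 g pc" 7 mem] by (simp add: blkH1_def)

lemma blkH1_s8: "at P pc (blkH1 g pc) \<Longrightarrow> step P (pc + 8, mem) = (if mem (g+4) = 0 then (pc+10) else pc + 9, mem)"
  using step_gen[of P pc "blkH1 g pc" 8 mem] by (simp add: blkH1_def)

lemma blkH1_s9: "at P pc (blkH1 g pc) \<Longrightarrow> step P (pc + 9, mem) = (pc + 10, mem((g+18) := mem (g+18) + mem (g+1)))"
  using step_gen[of P pc "blkH1 g pc" 9 mem] by (simp add: blkH1_def)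

lemma blkH1_s10: "at P pc (blkH1 g pc) \<Longrightarrow> step P (pc + 10, mem) = (pc + 11, mem((g+14) := mem (g+14) + mem (g+1)))"
  using step_gen[of P pc "blkH1 g pc" 10 mem] by (simp add: blkH1_def)

lemma blkH1_s11: "at P pc (blkH1 g pc) \<Longrightarrow> step P (pc + 11, mem) = (pc + 12, mem((g+15) := mem (g+15) - mem (g+1)))"
  using step_gen[of P pc "blkH1 g pc" 11 mem] by (simp add: blkH1_def)

lemma blkH1_s12: "at P pc (blkH1 g pc) \<Longrightarrow> step P (pc + 12, mem) = (if mem g = 0 then (pc+4) else pc + 13, mem)"
  using step_gen[of P pc "blkH1 g pc" 12 mem] by (simp add: blkH1_def)

lemmas blkH1_steps = blkH1_s0 blkH1_s1 blkH1_s2 blkH1_s3 blkH1_s4 blkH1_s5 blkH1_s6 blkH1_s7 blkH1_s8 blkH1_s9 blkH1_s10 blkH1_s11 blkH1_s12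

definition blkH2 :: "nat \<Rightarrow> nat \<Rightarrow> instr list" where
  "blkH2 g pc = [Add (g+14) (g+12) g, Add (g+17) (g+21) (g+1), Add (g+15) 0 g, Sub (g+19) 2 (g+18), Jz (g+15) (pc+23), Load (g+4) (g+14), Add (g+20) (g+4) (g+4), Sub (g+4) (g+20) (g+2), Jz (g+4) (pc+11), Store (g+17) (g+1), Jz g (pc+19), Add (g+4) (g+20) (g+1), Sub (g+4) (g+4) (g+2), Jz (g+4) (pc+18), Jz (g+19) (pc+18), Store (g+17) (g+1), Sub (g+19) (g+19) (g+1), Jz g (pc+19), Store (g+17) g, Add (g+14) (g+14) (g+1), Add (g+17) (g+17) (g+1), Sub (g+15) (g+15) (g+1), Jz g (pc+4)]"

lemma blkH2_len[simp]: "length (blkH2 g pc) = 23" by (simp add: blkH2_def)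

lemma blkH2_s0: "at P pc (blkH2 g pc) \<Longrightarrow> step P (pc, mem) = (Suc pc, mem((g+14) := mem (g+12) + mem g))"
  using step_gen[of P pc "blkH2 g pc" 0 mem] by (simp add: blkH2_def)

lemma blkH2_s1: "at P pc (blkH2 g pc) \<Longrightarrow> step P (Suc pc, mem) = (Suc (Suc pc), mem((g+17) := mem (g+21) + mem (g+1)))"
  using step_gen[of P pc "blkH2 g pc" 1 mem] by (simp add: blkH2_def)

lemma blkH2_s2: "at P pc (blkH2 g pc) \<Longrightarrow> step P (Suc (Suc pc), mem) = (pc + 3, mem((g+15) := mem 0 + mem g))"
  using step_gen[of P pc "blkH2 g pc" 2 mem] by (simp add: blkH2_def)

lemma blkH2_s3: "at P pc (blkH2 g pc) \<Longrightarrow> step P (pc + 3, mem) = (pc + 4, mem((g+19) := mem 2 - mem (g+18)))"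
  using step_gen[of P pc "blkH2 g pc" 3 mem] by (simp add: blkH2_def)

lemma blkH2_s4: "at P pc (blkH2 g pc) \<Longrightarrow> step P (pc + 4, mem) = (if mem (g+15) = 0 then (pc+23) else pc + 5, mem)"
  using step_gen[of P pc "blkH2 g pc" 4 mem] by (simp add: blkH2_def)

lemma blkH2_s5: "at P pc (blkH2 g pc) \<Longrightarrow> step P (pc + 5, mem) = (pc + 6, mem((g+4) := mem (mem (g+14))))"
  using step_gen[of P pc "blkH2 g pc" 5 mem] by (simp add: blkH2_def)

lemma blkH2_s6: "at P pc (blkH2 g pc) \<Longrightarrow> step P (pc + 6, mem) = (pc + 7, mem((g+20) := mem (g+4) + mem (g+4)))"
  using step_gen[of P pc "blkH2 g pc" 6 mem] by (simp add: blkH2_def)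

lemma blkH2_s7: "at P pc (blkH2 g pc) \<Longrightarrow> step P (pc + 7, mem) = (pc + 8, mem((g+4) := mem (g+20) - mem (g+2)))"
  using step_gen[of P pc "blkH2 g pc" 7 mem] by (simp add: blkH2_def)

lemma blkH2_s8: "at P pc (blkH2 g pc) \<Longrightarrow> step P (pc + 8, mem) = (if mem (g+4) = 0 then (pc+11) else pc + 9, mem)"
  using step_gen[of P pc "blkH2 g pc" 8 mem] by (simp add: blkH2_def)

lemma blkH2_s9: "at P pc (blkH2 g pc) \<Longrightarrow> step P (pc + 9, mem) = (pc + 10, mem(mem (g+17) := mem (g+1)))"
  using step_gen[of P pc "blkH2 g pc" 9 mem] by (simp add: blkH2_def)

lemma blkH2_s10: "at P pc (blkH2 g pc) \<Longrightarrow> step P (pc + 10, mem) = (if mem g = 0 then (pc+19) else pc + 11, mem)"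
  using step_gen[of P pc "blkH2 g pc" 10 mem] by (simp add: blkH2_def)

lemma blkH2_s11: "at P pc (blkH2 g pc) \<Longrightarrow> step P (pc + 11, mem) = (pc + 12, mem((g+4) := mem (g+20) + mem (g+1)))"
  using step_gen[of P pc "blkH2 g pc" 11 mem] by (simp add: blkH2_def)

lemma blkH2_s12: "at P pc (blkH2 g pc) \<Longrightarrow> step P (pc + 12, mem) = (pc + 13, mem((g+4) := mem (g+4) - mem (g+2)))"
  using step_gen[of P pc "blkH2 g pc" 12 mem] by (simp add: blkH2_def)

lemma blkH2_s13: "at P pc (blkH2 g pc) \<Longrightarrow> step P (pc + 13, mem) = (if mem (g+4) = 0 then (pc+18) else pc + 14, mem)"
  using step_gen[of P pc "blkH2 g pc" 13 mem] by (simp add: blkH2_def)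

lemma blkH2_s14: "at P pc (blkH2 g pc) \<Longrightarrow> step P (pc + 14, mem) = (if mem (g+19) = 0 then (pc+18) else pc + 15, mem)"
  using step_gen[of P pc "blkH2 g pc" 14 mem] by (simp add: blkH2_def)

lemma blkH2_s15: "at P pc (blkH2 g pc) \<Longrightarrow> step P (pc + 15, mem) = (pc + 16, mem(mem (g+17) := mem (g+1)))"
  using step_gen[of P pc "blkH2 g pc" 15 mem] by (simp add: blkH2_def)

lemma blkH2_s16: "at P pc (blkH2 g pc) \<Longrightarrow> step P (pc + 16, mem) = (pc + 17, mem((g+19) := mem (g+19) - mem (g+1)))"
  using step_gen[of P pc "blkH2 g pc" 16 mem] by (simp add: blkH2_def)

lemma blkH2_s17: "at P pc (blkH2 g pc) \<Longrightarrow> step P (pc + 17, mem) = (if mem g = 0 then (pc+19) else pc + 18, mem)"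
  using step_gen[of P pc "blkH2 g pc" 17 mem] by (simp add: blkH2_def)

lemma blkH2_s18: "at P pc (blkH2 g pc) \<Longrightarrow> step P (pc + 18, mem) = (pc + 19, mem(mem (g+17) := mem g))"
  using step_gen[of P pc "blkH2 g pc" 18 mem] by (simp add: blkH2_def)

lemma blkH2_s19: "at P pc (blkH2 g pc) \<Longrightarrow> step P (pc + 19, mem) = (pc + 20, mem((g+14) := mem (g+14) + mem (g+1)))"
  using step_gen[of P pc "blkH2 g pc" 19 mem] by (simp add: blkH2_def)

lemma blkH2_s20: "at P pc (blkH2 g pc) \<Longrightarrow> step P (pc + 20, mem) = (pc + 21, mem((g+17) := mem (g+17) + mem (g+1)))"
  using step_gen[of P pc "blkH2 g pc" 20 mem] by (simp add: blkH2_def)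

lemma blkH2_s21: "at P pc (blkH2 g pc) \<Longrightarrow> step P (pc + 21, mem) = (pc + 22, mem((g+15) := mem (g+15) - mem (g+1)))"
  using step_gen[of P pc "blkH2 g pc" 21 mem] by (simp add: blkH2_def)

lemma blkH2_s22: "at P pc (blkH2 g pc) \<Longrightarrow> step P (pc + 22, mem) = (if mem g = 0 then (pc+4) else pc + 23, mem)"
  using step_gen[of P pc "blkH2 g pc" 22 mem] by (simp add: blkH2_def)

lemmas blkH2_steps = blkH2_s0 blkH2_s1 blkH2_s2 blkH2_s3 blkH2_s4 blkH2_s5 blkH2_s6 blkH2_s7 blkH2_s8 blkH2_s9 blkH2_s10 blkH2_s11 blkH2_s12 blkH2_s13 blkH2_s14 blkH2_s15 blkH2_s16 blkH2_s17 blkH2_s18 blkH2_s19 blkH2_s20 blkH2_s21 blkH2_s22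

definition blkH3 :: "nat \<Rightarrow> nat \<Rightarrow> instr list" where
  "blkH3 g pc = [Sub (g+4) (g+18) 2, Jz (g+4) (pc+4), Store (g+21) g, Jz g (pc+8), Jz (g+19) (pc+7), Store (g+21) g, Jz g (pc+8), Store (g+21) (g+1), Const (g+4) 1, Add (g+22) 0 (g+4)]"

lemma blkH3_len[simp]: "length (blkH3 g pc) = 10" by (simp add: blkH3_def)

lemma blkH3_s0: "at P pc (blkH3 g pc) \<Longrightarrow> step P (pc, mem) = (Suc pc, mem((g+4) := mem (g+18) - mem 2))"
  using step_gen[of P pc "blkH3 g pc" 0 mem] by (simp add: blkH3_def)

lemma blkH3_s1: "at P pc (blkH3 g pc) \<Longrightarrow> step P (Suc pc, mem) = (if mem (g+4) = 0 then (pc+4) else Suc (Suc pc), mem)"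
  using step_gen[of P pc "blkH3 g pc" 1 mem] by (simp add: blkH3_def)

lemma blkH3_s2: "at P pc (blkH3 g pc) \<Longrightarrow> step P (Suc (Suc pc), mem) = (pc + 3, mem(mem (g+21) := mem g))"
  using step_gen[of P pc "blkH3 g pc" 2 mem] by (simp add: blkH3_def)

lemma blkH3_s3: "at P pc (blkH3 g pc) \<Longrightarrow> step P (pc + 3, mem) = (if mem g = 0 then (pc+8) else pc + 4, mem)"
  using step_gen[of P pc "blkH3 g pc" 3 mem] by (simp add: blkH3_def)

lemma blkH3_s4: "at P pc (blkH3 g pc) \<Longrightarrow> step P (pc + 4, mem) = (if mem (g+19) = 0 then (pc+7) else pc + 5, mem)"
  using step_gen[of P pc "blkH3 g pc" 4 mem] by (simp add: blkH3_def)

lemma blkH3_s5: "at P pc (blkH3 g pc) \<Longrightarrow> step P (pc + 5, mem) = (pc + 6, mem(mem (g+21) := mem g))"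
  using step_gen[of P pc "blkH3 g pc" 5 mem] by (simp add: blkH3_def)

lemma blkH3_s6: "at P pc (blkH3 g pc) \<Longrightarrow> step P (pc + 6, mem) = (if mem g = 0 then (pc+8) else pc + 7, mem)"
  using step_gen[of P pc "blkH3 g pc" 6 mem] by (simp add: blkH3_def)

lemma blkH3_s7: "at P pc (blkH3 g pc) \<Longrightarrow> step P (pc + 7, mem) = (pc + 8, mem(mem (g+21) := mem (g+1)))"
  using step_gen[of P pc "blkH3 g pc" 7 mem] by (simp add: blkH3_def)

lemma blkH3_s8: "at P pc (blkH3 g pc) \<Longrightarrow> step P (pc + 8, mem) = (pc + 9, mem((g+4) := 1))"
  using step_gen[of P pc "blkH3 g pc" 8 mem] by (simp add: blkH3_def)

lemma blkH3_s9: "at P pc (blkH3 g pc) \<Longrightarrow> step P (pc + 9, mem) = (pc + 10, mem((g+22) := mem 0 + mem (g+4)))"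
  using step_gen[of P pc "blkH3 g pc" 9 mem] by (simp add: blkH3_def)

lemmas blkH3_steps = blkH3_s0 blkH3_s1 blkH3_s2 blkH3_s3 blkH3_s4 blkH3_s5 blkH3_s6 blkH3_s7 blkH3_s8 blkH3_s9


lemma card_lt_Suc: "card {c'. c' < Suc c \<and> P c'} = card {c'. c' < c \<and> P c'} + (if P c then 1 else 0)"
proof -
  have "{c'. c' < Suc c \<and> P c'} = {c'. c' < c \<and> P c'} \<union> (if P c then {c} else {})"
    by (auto simp: less_Suc_eq)
  thus ?thesis by (simp add: card_insert_if)
qed

lemma H1_st:
  assumes at: "at P pc (blkH1 g pc)" and g: "2 \<le> g"
  and rr: "mo g = 0" "mo (g+1) = 1" "mo (g+2) = n"
  and rc: "mo (g+14) = x" "mo (g+15) = k" "mo (g+18) = s0" and nz: "k \<noteq> 0" and ne: "x \<noteq> g+4"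
  and t: "mo x + mo x - n \<noteq> 0"
  shows "(step P ^^ 9) (pc + 4, mo) = (pc + 4, mo(g + 4 := mo x + mo x - n, g + 18 := Suc s0, g + 14 := Suc x, g + 15 := k - 1))"
  using g rr rc nz t ne by (simp add: blkH1_steps[OF at] funpow_numeral funpow_1')

lemma H1_ns:
  assumes at: "at P pc (blkH1 g pc)" and g: "2 \<le> g"
  and rr: "mo g = 0" "mo (g+1) = 1" "mo (g+2) = n"
  and rc: "mo (g+14) = x" "mo (g+15) = k" and nz: "k \<noteq> 0" and ne: "x \<noteq> g+4"
  and t: "mo x + mo x - n = 0"
  shows "(step P ^^ 8) (pc + 4, mo) = (pc + 4, mo(g + 4 := 0, g + 14 := Suc x, g + 15 := k - 1))"
  using g rr rc nz t ne by (simp add: blkH1_steps[OF at] funpow_numeral funpow_1')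

lemma H1_init:
  assumes at: "at P pc (blkH1 g pc)" and g: "2 \<le> g" and r: "mem g = 0" "mem 0 = m" "mem (g+12) = Cb"
  shows "(step P ^^ 4) (pc, mem) = (pc + 4, mem(g+21 := Cb + m, g+14 := Cb, g+15 := m, g+18 := 0))"
  using g r by (simp add: blkH1_steps[OF at] funpow_numeral funpow_1')

lemma H1_exit:
  assumes at: "at P pc (blkH1 g pc)" and r: "mem (g+15) = 0"
  shows "(step P ^^ 1) (pc + 4, mem) = (pc + 13, mem)"
  using r by (simp add: blkH1_steps[OF at] funpow_1')

lemma phaseH1:
  assumes at: "at P pc (blkH1 g pc)" and g: "2 \<le> g"
    and r: "mem g = 0" "mem (g+1) = 1" "mem (g+2) = n" "mem 0 = m" "mem (g+12) = Cb"
    and Cb: "g + 23 \<le> Cb"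
  shows "\<exists>mem'. reach P (pc, mem) (4 + (m * 9 + 1)) (pc + 13, mem') \<and> mem' (g+21) = Cb + m \<and>
     mem' (g+18) = card {c. c < m \<and> n < 2 * mem (Cb + c)} \<and>
     (\<forall>a. a \<notin> {g+4, g+14, g+15, g+18, g+21} \<longrightarrow> mem' a = mem a)"
proof -
  define fr where "fr = (\<lambda>a. a \<notin> {g+4, g+14, g+15, g+18, g+21})"
  let ?m0 = "mem(g+21 := Cb + m, g+14 := Cb, g+15 := m, g+18 := 0)"
  let ?I = "\<lambda>c m'. m' (g+21) = Cb + m \<and> m' (g+14) = Cb + c \<and> m' (g+15) = m - c \<and>
     m' (g+18) = card {c'. c' < c \<and> n < 2 * mem (Cb + c')} \<and> (\<forall>a. fr a \<longrightarrow> m' a = mem a)"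
  let ?Q = "\<lambda>m'. m' (g+21) = Cb + m \<and>
     m' (g+18) = card {c. c < m \<and> n < 2 * mem (Cb + c)} \<and> (\<forall>a. fr a \<longrightarrow> m' a = mem a)"
  have init: "(step P ^^ 4) (pc, mem) = (pc + 4, ?m0)"
    using H1_init[OF at g r(1) r(4) r(5)] .
  have I0: "?I 0 ?m0" using g Cb by (auto simp: fr_def)
  have L: "\<exists>m'. reach P (pc + 4, ?m0) (m * 9 + 1) (pc + 13, m') \<and> ?Q m'"
  proof (rule loop_rule[where I = ?I])
    fix c mo assume c: "c < m" and I: "?I c mo"
    have fro: "\<And>a. fr a \<Longrightarrow> mo a = mem a" using I by blast
    have rr: "mo g = 0" "mo (g+1) = 1" "mo (g+2) = n"
      using fro[of g] fro[of "g+1"] fro[of "g+2"] r g by (auto simp: fr_def)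
    have rc: "mo (g+14) = Cb + c" "mo (g+15) = m - c" "mo (g+18) = card {c'. c' < c \<and> n < 2 * mem (Cb + c')}" using I by auto
    have cnt: "mo (Cb + c) = mem (Cb + c)" using fro[of "Cb + c"] c Cb by (auto simp: fr_def)
    have nz: "m - c \<noteq> 0" using c by simp
    have ne: "Cb + c \<noteq> g+4" using Cb by simp
    obtain xx yy where ex: "reach P (pc + 4, mo) 9 (pc + 4, mo(g + 4 := xx, g + 18 := yy, g + 14 := Suc (Cb + c), g + 15 := m - c - 1))"
      and yy: "yy = card {c'. c' < Suc c \<and> n < 2 * mem (Cb + c')}"
    proof (cases "n < 2 * mem (Cb + c)")
      case True
      hence t: "mo (Cb + c) + mo (Cb + c) - n \<noteq> 0" using cnt by simp
      have "reach P (pc + 4, mo) 9 (pc + 4, mo(g + 4 := mo (Cb + c) + mo (Cb + c) - n,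
          g + 18 := Suc (card {c'. c' < c \<and> n < 2 * mem (Cb + c')}), g + 14 := Suc (Cb + c), g + 15 := m - c - 1))"
        using reach_eq[OF H1_st[OF at g rr rc nz ne t]] .
      then show ?thesis using that True by (simp add: card_lt_Suc)
    next
      case False
      hence t: "mo (Cb + c) + mo (Cb + c) - n = 0" using cnt by simp
      have "reach P (pc + 4, mo) 9 (pc + 4, mo(g + 4 := 0, g + 14 := Suc (Cb + c), g + 15 := m - c - 1))"
        using reach_eqI[OF H1_ns[OF at g rr rc(1,2) nz ne t]] by simp
      moreover have "mo(g + 4 := 0, g + 14 := Suc (Cb + c), g + 15 := m - c - 1) =
         mo(g + 4 := 0, g + 18 := mo (g+18), g + 14 := Suc (Cb + c), g + 15 := m - c - 1)"
        by (simp add: fun_eq_iff)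
      ultimately show ?thesis using that False rc(3) by (simp add: card_lt_Suc)
    qed
    let ?m2 = "mo(g + 4 := xx, g + 18 := yy, g + 14 := Suc (Cb + c), g + 15 := m - c - 1)"
    have "?I (Suc c) ?m2" using I yy unfolding fr_def by auto
    thus "\<exists>m''. reach P (pc + 4, mo) 9 (pc + 4, m'') \<and> ?I (Suc c) m''" using ex by blast
  next
    fix m' assume I: "?I m m'"
    have "(step P ^^ 1) (pc + 4, m') = (pc + 13, m')" using H1_exit[OF at] I by simp
    thus "\<exists>m''. reach P (pc + 4, m') 1 (pc + 13, m'') \<and> ?Q m''" using I
      by (blast intro: reach_eq)
  qed (rule I0)
  then obtain m' where "reach P (pc + 4, ?m0) (m * 9 + 1) (pc + 13, m')" "?Q m'"
    by blast
  then show ?thesis using reach_trans[OF reach_eq[OF init]] unfolding fr_def by blast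
qed


lemma H2_i:
  assumes at: "at P pc (blkH2 g pc)" and g: "2 \<le> g"
  and rr: "mo g = 0" "mo (g+1) = 1" "mo (g+2) = n"
  and rc: "mo (g+14) = x" "mo (g+17) = a" "mo (g+15) = k" "mo x = v" and nz: "k \<noteq> 0"
  and ne: "g \<noteq> a" "g + 1 \<noteq> a" "g+2 \<noteq> a" "g+4 \<noteq> a" "g+14 \<noteq> a" "g+15 \<noteq> a" "g+17 \<noteq> a" "g+19 \<noteq> a" "g+20 \<noteq> a"
         "a \<noteq> g" "a \<noteq> g+1" "a \<noteq> g+2" "a \<noteq> g+4" "a \<noteq> g+14" "a \<noteq> g+15" "a \<noteq> g+17" "a \<noteq> g+19" "a \<noteq> g+20" "x \<noteq> g+4" "x \<noteq> g+20"
  and t: "v + v - n \<noteq> 0"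
  shows "(step P ^^ 11) (pc + 4, mo) = (pc + 4, mo(g + 20 := v + v, g + 4 := v + v - n, a := Suc 0, g + 14 := Suc x, g + 17 := Suc a, g + 15 := k - Suc 0))"
  using g rr rc nz t ne by (simp add: blkH2_steps[OF at] funpow_numeral funpow_1')
lemma H2_ii:
  assumes at: "at P pc (blkH2 g pc)" and g: "2 \<le> g"
  and rr: "mo g = 0" "mo (g+1) = 1" "mo (g+2) = n"
  and rc: "mo (g+14) = x" "mo (g+17) = a" "mo (g+15) = k" "mo x = v" "mo (g+19) = b" and nz: "k \<noteq> 0"
  and ne: "g \<noteq> a" "g + 1 \<noteq> a" "g+2 \<noteq> a" "g+4 \<noteq> a" "g+14 \<noteq> a" "g+15 \<noteq> a" "g+17 \<noteq> a" "g+19 \<noteq> a" "g+20 \<noteq> a"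
         "a \<noteq> g" "a \<noteq> g+1" "a \<noteq> g+2" "a \<noteq> g+4" "a \<noteq> g+14" "a \<noteq> g+15" "a \<noteq> g+17" "a \<noteq> g+19" "a \<noteq> g+20" "x \<noteq> g+4" "x \<noteq> g+20"
  and t:  "v + v - n = 0" "v + v + 1 - n \<noteq> 0" "b \<noteq> 0"
  shows "(step P ^^ 16) (pc + 4, mo) = (pc + 4, mo(g + 20 := v + v, g + 4 := Suc (v + v) - n, a := Suc 0, g + 19 := b - Suc 0, g + 14 := Suc x, g + 17 := Suc a, g + 15 := k - Suc 0))"
  using g rr rc nz t ne by (simp add: blkH2_steps[OF at] funpow_numeral funpow_1')

lemma H2_iii:
  assumes at: "at P pc (blkH2 g pc)" and g: "2 \<le> g"
  and rr: "mo g = 0" "mo (g+1) = 1" "mo (g+2) = n"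
  and rc: "mo (g+14) = x" "mo (g+17) = a" "mo (g+15) = k" "mo x = v" "mo (g+19) = b" and nz: "k \<noteq> 0"
  and ne: "g \<noteq> a" "g + 1 \<noteq> a" "g+2 \<noteq> a" "g+4 \<noteq> a" "g+14 \<noteq> a" "g+15 \<noteq> a" "g+17 \<noteq> a" "g+19 \<noteq> a" "g+20 \<noteq> a"
         "a \<noteq> g" "a \<noteq> g+1" "a \<noteq> g+2" "a \<noteq> g+4" "a \<noteq> g+14" "a \<noteq> g+15" "a \<noteq> g+17" "a \<noteq> g+19" "a \<noteq> g+20" "x \<noteq> g+4" "x \<noteq> g+20"
  and t:  "v + v - n = 0" "v + v + 1 - n \<noteq> 0" "b = 0"
  shows "(step P ^^ 14) (pc + 4, mo) = (pc + 4, mo(g + 20 := v + v, g + 4 := Suc (v + v) - n, a := 0, g + 14 := Suc x, g + 17 := Suc a, g + 15 := k - Suc 0))"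
  using g rr rc nz t ne by (simp add: blkH2_steps[OF at] funpow_numeral funpow_1')

lemma H2_iv:
  assumes at: "at P pc (blkH2 g pc)" and g: "2 \<le> g"
  and rr: "mo g = 0" "mo (g+1) = 1" "mo (g+2) = n"
  and rc: "mo (g+14) = x" "mo (g+17) = a" "mo (g+15) = k" "mo x = v" "mo (g+19) = b" and nz: "k \<noteq> 0"
  and ne: "g \<noteq> a" "g + 1 \<noteq> a" "g+2 \<noteq> a" "g+4 \<noteq> a" "g+14 \<noteq> a" "g+15 \<noteq> a" "g+17 \<noteq> a" "g+19 \<noteq> a" "g+20 \<noteq> a"
         "a \<noteq> g" "a \<noteq> g+1" "a \<noteq> g+2" "a \<noteq> g+4" "a \<noteq> g+14" "a \<noteq> g+15" "a \<noteq> g+17" "a \<noteq> g+19" "a \<noteq> g+20" "x \<noteq> g+4" "x \<noteq> g+20"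
  and t:  "v + v - n = 0" "v + v + 1 - n = 0"
  shows "(step P ^^ 13) (pc + 4, mo) = (pc + 4, mo(g + 20 := v + v, g + 4 := 0, a := 0, g + 14 := Suc x, g + 17 := Suc a, g + 15 := k - Suc 0))"
  using g rr rc nz t ne by (simp add: blkH2_steps[OF at] funpow_numeral funpow_1')


lemma H2_init:
  assumes at: "at P pc (blkH2 g pc)" and g: "3 \<le> g" and r: "mem g = 0" "mem (g+1) = 1" "mem 0 = m" "mem (g+12) = Cb"
     "mem (g+21) = Ob" "mem 2 = kk" "mem (g+18) = s"
  shows "(step P ^^ 4) (pc, mem) = (pc + 4, mem(g+14 := Cb, g+17 := Suc Ob, g+15 := m, g+19 := kk - s))"
  using g r by (simp add: blkH2_steps[OF at] funpow_numeral funpow_1')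

lemma H2_exit:
  assumes at: "at P pc (blkH2 g pc)" and r: "mem (g+15) = 0"
  shows "(step P ^^ 1) (pc + 4, mem) = (pc + 23, mem)"
  using r by (simp add: blkH2_steps[OF at] funpow_1')

definition tc :: "(nat \<Rightarrow> nat) \<Rightarrow> nat \<Rightarrow> nat \<Rightarrow> nat" where
  "tc cn n c = card {c'. c' < c \<and> 2 * cn c' = n}"

definition selb :: "(nat \<Rightarrow> nat) \<Rightarrow> nat \<Rightarrow> nat \<Rightarrow> nat \<Rightarrow> nat" where
  "selb cn n j c = (if n < 2 * cn c \<or> (2 * cn c = n \<and> tc cn n c < j) then 1 else 0)"

lemma tc_Suc: "tc cn n (Suc c) = tc cn n c + (if 2 * cn c = n then 1 else 0)"
proof -
  have "{c'. c' < Suc c \<and> 2 * cn c' = n} = {c'. c' < c \<and> 2 * cn c' = n} \<union> (if 2 * cn c = n then {c} else {})"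
    by (auto simp: less_Suc_eq)
  thus ?thesis by (simp add: tc_def card_insert_if)
qed

lemma phaseH2:
  assumes at: "at P pc (blkH2 g pc)" and g: "3 \<le> g"
    and r: "mem g = 0" "mem (g+1) = 1" "mem (g+2) = n" "mem 0 = m" "mem (g+12) = Cb" "mem (g+21) = Cb + m"
       "mem 2 = kk" "mem (g+18) = s"
    and Cb: "g + 23 \<le> Cb"
  shows "\<exists>mem'. reach P (pc, mem) (4 + (m * 16 + 1)) (pc + 23, mem') \<and>
     mem' (g+19) = (kk - s) - tc (\<lambda>c. mem (Cb + c)) n m \<and>
     (\<forall>c<m. mem' (Cb + m + 1 + c) = selb (\<lambda>c. mem (Cb + c)) n (kk - s) c) \<and>
     (\<forall>a. a \<notin> {g+4, g+14, g+15, g+17, g+19, g+20} \<and> (a < Cb + m + 1 \<or> Cb + m + 1 + m \<le> a) \<longrightarrow> mem' a = mem a)"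
proof -
  have g2: "2 \<le> g" using g by simp
  define cn where "cn = (\<lambda>c. mem (Cb + c))"
  define fr where "fr = (\<lambda>a. a \<notin> {g+4, g+14, g+15, g+17, g+19, g+20} \<and> a < Cb + m + 1)"
  let ?m0 = "mem(g+14 := Cb, g+17 := Suc (Cb + m), g+15 := m, g+19 := kk - s)"
  let ?I = "\<lambda>c m'. m' (g+14) = Cb + c \<and> m' (g+17) = Cb + m + 1 + c \<and> m' (g+15) = m - c \<and>
     m' (g+19) = (kk - s) - tc cn n c \<and>
     (\<forall>c'<c. m' (Cb + m + 1 + c') = selb cn n (kk - s) c') \<and>
     (\<forall>a. (fr a \<or> Cb + m + 1 + c \<le> a) \<longrightarrow> m' a = mem a)"
  let ?Q = "\<lambda>m'. m' (g+19) = (kk - s) - tc cn n m \<and>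
     (\<forall>c<m. m' (Cb + m + 1 + c) = selb cn n (kk - s) c) \<and>
     (\<forall>a. (fr a \<or> Cb + m + 1 + m \<le> a) \<longrightarrow> m' a = mem a)"
  have init: "(step P ^^ 4) (pc, mem) = (pc + 4, ?m0)"
    using H2_init[OF at g r(1) r(2) r(4) r(5) r(6) r(7) r(8)] .
  have I0: "?I 0 ?m0" using g Cb by (auto simp: fr_def tc_def)
  have L: "\<exists>m'. reach P (pc + 4, ?m0) (m * 16 + 1) (pc + 23, m') \<and> ?Q m'"
  proof (rule loop_rule[where I = ?I])
    fix c mo assume c: "c < m" and I: "?I c mo"
    have fro: "\<And>a. fr a \<Longrightarrow> mo a = mem a" using I by blast
    have rr: "mo g = 0" "mo (g+1) = 1" "mo (g+2) = n"
      using fro[of g] fro[of "g+1"] fro[of "g+2"] r g Cb by (auto simp: fr_def)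
    define a where "a = Cb + m + 1 + c"
    define b where "b = (kk - s) - tc cn n c"
    have rc: "mo (g+14) = Cb + c" "mo (g+17) = a" "mo (g+15) = m - c" "mo (Cb + c) = cn c" "mo (g+19) = b"
      using I fro[of "Cb + c"] c Cb by (auto simp: fr_def cn_def a_def b_def)
    have nz: "m - c \<noteq> 0" using c by simp
    have ne: "g \<noteq> a" "g + 1 \<noteq> a" "g+2 \<noteq> a" "g+4 \<noteq> a" "g+14 \<noteq> a" "g+15 \<noteq> a" "g+17 \<noteq> a" "g+19 \<noteq> a" "g+20 \<noteq> a"
         "a \<noteq> g" "a \<noteq> g+1" "a \<noteq> g+2" "a \<noteq> g+4" "a \<noteq> g+14" "a \<noteq> g+15" "a \<noteq> g+17" "a \<noteq> g+19" "a \<noteq> g+20"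
         "Cb + c \<noteq> g+4" "Cb + c \<noteq> g+20" using Cb by (auto simp: a_def)
    have eq19: "\<And>X BIT. mo(g + 20 := cn c + cn c, g + 4 := X, a := BIT, g + 14 := Suc (Cb + c), g + 17 := Suc a, g + 15 := m - c - 1)
      = mo(g + 20 := cn c + cn c, g + 4 := X, a := BIT, g + 19 := b, g + 14 := Suc (Cb + c), g + 17 := Suc a, g + 15 := m - c - 1)"
      using rc(5) ne by (auto simp: fun_eq_iff)
    obtain xx where ex: "reach P (pc + 4, mo) 16 (pc + 4, mo(g + 20 := cn c + cn c, g + 4 := xx, a := selb cn n (kk - s) c,
         g + 19 := (kk - s) - tc cn n (Suc c), g + 14 := Suc (Cb + c), g + 17 := Suc a, g + 15 := m - c - 1))"
    proof (cases "n < 2 * cn c")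
      case True
      hence t: "cn c + cn c - n \<noteq> 0" by simp
      have "reach P (pc + 4, mo) 16 (pc + 4, mo(g + 20 := cn c + cn c, g + 4 := cn c + cn c - n, a := 1, g + 14 := Suc (Cb + c), g + 17 := Suc a, g + 15 := m - c - 1))"
        using reach_eqI[OF H2_i[OF at g2 rr rc(1,2,3,4) nz ne t]] by simp
      moreover have "selb cn n (kk - s) c = 1" "(kk - s) - tc cn n (Suc c) = b" using True
        by (auto simp: selb_def tc_Suc b_def)
      ultimately show ?thesis using that eq19 by simp
    next
      case False
      show ?thesis
      proof (cases "2 * cn c = n")
        case tie: True
        hence t: "cn c + cn c - n = 0" "cn c + cn c + 1 - n \<noteq> 0" by simp_all
        show ?thesis
        proof (cases "b = 0")
          case True
          have "reach P (pc + 4, mo) 16 (pc + 4, mo(g + 20 := cn c + cn c, g + 4 := Suc (cn c + cn c) - n, a := 0, g + 14 := Suc (Cb + c), g + 17 := Suc a, g + 15 := m - c - 1))"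
            using reach_eqI[OF H2_iii[OF at g2 rr rc(1,2,3,4,5) nz ne t True]] by simp
          moreover have "selb cn n (kk - s) c = 0" "(kk - s) - tc cn n (Suc c) = b" using True tie
            by (auto simp: selb_def tc_Suc b_def)
          ultimately show ?thesis using that eq19 by simp
        next
          case bnz: False
          have "reach P (pc + 4, mo) 16 (pc + 4, mo(g + 20 := cn c + cn c, g + 4 := Suc (cn c + cn c) - n, a := Suc 0, g + 19 := b - Suc 0, g + 14 := Suc (Cb + c), g + 17 := Suc a, g + 15 := m - c - 1))"
            using reach_eqI[OF H2_ii[OF at g2 rr rc(1,2,3,4,5) nz ne t bnz]] by simp
          moreover have "selb cn n (kk - s) c = 1" "(kk - s) - tc cn n (Suc c) = b - 1" using bnz tie
            by (auto simp: selb_def tc_Suc b_def)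
          ultimately show ?thesis using that by simp
        qed
      next
        case nt: False
        hence t: "cn c + cn c - n = 0" "cn c + cn c + 1 - n = 0" using False by simp_all
        have "reach P (pc + 4, mo) 16 (pc + 4, mo(g + 20 := cn c + cn c, g + 4 := 0, a := 0, g + 14 := Suc (Cb + c), g + 17 := Suc a, g + 15 := m - c - 1))"
          using reach_eqI[OF H2_iv[OF at g2 rr rc(1,2,3,4,5) nz ne t]] by simp
        moreover have "selb cn n (kk - s) c = 0" "(kk - s) - tc cn n (Suc c) = b" using False nt
          by (auto simp: selb_def tc_Suc b_def)
        ultimately show ?thesis using that eq19 by simp
      qed
    qed
    let ?m2 = "mo(g + 20 := cn c + cn c, g + 4 := xx, a := selb cn n (kk - s) c,
         g + 19 := (kk - s) - tc cn n (Suc c), g + 14 := Suc (Cb + c), g + 17 := Suc a, g + 15 := m - c - 1)"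
    have fr2: "\<And>a'. a' \<notin> {g+4, g+14, g+15, g+17, g+19, g+20, a} \<Longrightarrow> ?m2 a' = mo a'" by auto
    have "?I (Suc c) ?m2"
    proof (intro conjI allI impI)
      show "?m2 (g+14) = Cb + Suc c" "?m2 (g+17) = Cb + m + 1 + Suc c" "?m2 (g+15) = m - Suc c"
         "?m2 (g+19) = (kk - s) - tc cn n (Suc c)" by (simp_all add: a_def)
      fix c' assume c': "c' < Suc c"
      show "?m2 (Cb + m + 1 + c') = selb cn n (kk - s) c'"
      proof (cases "c' = c")
        case True thus ?thesis using ne by (simp add: a_def)
      next
        case False
        hence "c' < c" using c' by simp
        moreover have "?m2 (Cb + m + 1 + c') = mo (Cb + m + 1 + c')" using False Cb by (intro fr2) (auto simp: a_def)
        ultimately show ?thesis using I by auto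
      qed
    next
      fix a' assume a': "fr a' \<or> Cb + m + 1 + Suc c \<le> a'"
      have "a' \<notin> {g+4, g+14, g+15, g+17, g+19, g+20, a}" using a' Cb unfolding fr_def a_def by auto
      hence "?m2 a' = mo a'" by (rule fr2)
      thus "?m2 a' = mem a'" using I a' by (auto simp: a_def)
    qed
    thus "\<exists>m''. reach P (pc + 4, mo) 16 (pc + 4, m'') \<and> ?I (Suc c) m''" using ex by blast
  next
    fix m' assume I: "?I m m'"
    have "(step P ^^ 1) (pc + 4, m') = (pc + 23, m')" using H2_exit[OF at] I by simp
    thus "\<exists>m''. reach P (pc + 4, m') 1 (pc + 23, m'') \<and> ?Q m''" using I
      by (blast intro: reach_eq)
  qed (rule I0)
  then obtain m' where "reach P (pc + 4, ?m0) (m * 16 + 1) (pc + 23, m')" "?Q m'"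
    by blast
  moreover have "\<forall>a. a \<notin> {g+4, g+14, g+15, g+17, g+19, g+20} \<and> (a < Cb + m + 1 \<or> Cb + m + 1 + m \<le> a) \<longrightarrow> m' a = mem a"
    using calculation(2) unfolding fr_def by auto
  moreover have "?m0 = mem(g+14 := Cb, g+17 := Suc (Cb + m), g+15 := m, g+19 := kk - s)" by simp
  ultimately show ?thesis using reach_trans[OF reach_eq[OF init]] unfolding cn_def by blast
qed


lemma H3_a:
  assumes at: "at P pc (blkH3 g pc)" and g: "3 \<le> g" and r: "mem g = 0" "mem (g+1) = 1" "mem 0 = m"
     "mem (g+18) = s" "mem 2 = kk" "mem (g+19) = bu" "mem (g+21) = Ob" and ne: "Ob \<noteq> g+4" "Ob \<noteq> g+22" "Ob \<noteq> g" "Ob \<noteq> g+1" "Ob \<noteq> 0"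
  and t: "s - kk \<noteq> 0"
  shows "(step P ^^ 6) (pc, mem) = (pc + 10, mem(Ob := 0, g + 4 := Suc 0, g + 22 := Suc m))"
  using g r ne t by (simp add: blkH3_steps[OF at] funpow_numeral funpow_1')
lemma H3_b:
  assumes at: "at P pc (blkH3 g pc)" and g: "3 \<le> g" and r: "mem g = 0" "mem (g+1) = 1" "mem 0 = m"
     "mem (g+18) = s" "mem 2 = kk" "mem (g+19) = bu" "mem (g+21) = Ob" and ne: "Ob \<noteq> g+4" "Ob \<noteq> g+22" "Ob \<noteq> g" "Ob \<noteq> g+1" "Ob \<noteq> 0"
  and t: "s - kk = 0" "bu \<noteq> 0"
  shows "(step P ^^ 7) (pc, mem) = (pc + 10, mem(Ob := 0, g + 4 := Suc 0, g + 22 := Suc m))"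
  using g r ne t by (simp add: blkH3_steps[OF at] funpow_numeral funpow_1')
lemma H3_c:
  assumes at: "at P pc (blkH3 g pc)" and g: "3 \<le> g" and r: "mem g = 0" "mem (g+1) = 1" "mem 0 = m"
     "mem (g+18) = s" "mem 2 = kk" "mem (g+19) = bu" "mem (g+21) = Ob" and ne: "Ob \<noteq> g+4" "Ob \<noteq> g+22" "Ob \<noteq> g" "Ob \<noteq> g+1" "Ob \<noteq> 0"
  and t: "s - kk = 0" "bu = 0"
  shows "(step P ^^ 6) (pc, mem) = (pc + 10, mem(Ob := Suc 0, g + 4 := Suc 0, g + 22 := Suc m))"
  using g r ne t by (simp add: blkH3_steps[OF at] funpow_numeral funpow_1')

lemma phaseH3:
  assumes at: "at P pc (blkH3 g pc)" and g: "3 \<le> g" and r: "mem g = 0" "mem (g+1) = 1" "mem 0 = m"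
     "mem (g+18) = s" "mem 2 = kk" "mem (g+19) = bu" "mem (g+21) = Ob" and Ob: "g + 23 \<le> Ob"
  shows "reach P (pc, mem) 7 (pc + 10, mem(Ob := (if s \<le> kk \<and> bu = 0 then 1 else 0), g + 4 := Suc 0, g + 22 := Suc m))"
proof -
  have ne: "Ob \<noteq> g+4" "Ob \<noteq> g+22" "Ob \<noteq> g" "Ob \<noteq> g+1" "Ob \<noteq> 0" using Ob by auto
  show ?thesis
  proof (cases "s \<le> kk")
    case False
    hence t: "s - kk \<noteq> 0" by simp
    show ?thesis using reach_eqI[OF H3_a[OF at g r ne t]] False by simp
  next
    case True
    hence t: "s - kk = 0" by simp
    show ?thesis
    proof (cases "bu = 0")
      case True
      show ?thesis using reach_eqI[OF H3_c[OF at g r ne t True]] True \<open>s \<le> kk\<close> by simp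
    next
      case False
      show ?thesis using reach_eqI[OF H3_b[OF at g r ne t False]] False by simp
    qed
  qed
qed


definition blkZ :: "nat \<Rightarrow> nat \<Rightarrow> nat \<Rightarrow> instr list" where
  "blkZ g R pc = [Const (g+4) (g+R), Sub (g+6) (g+22) (g+4), Add (g+8) (g+21) (g+4), Add (g+9) (g+4) g, Jz (g+6) (pc+11), Load (g+10) (g+8), Store (g+9) (g+10), Add (g+8) (g+8) (g+1), Add (g+9) (g+9) (g+1), Sub (g+6) (g+6) (g+1), Jz g (pc+4), Const (g+4) (g+R-1), Add (g+R-1) (g+21) (g+4)]"

lemma blkZ_len[simp]: "length (blkZ g R pc) = 13" by (simp add: blkZ_def)

lemma blkZ_s0: "at P pc (blkZ g R pc) \<Longrightarrow> step P (pc, mem) = (Suc pc, mem((g+4) := (g+R)))"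
  using step_gen[of P pc "blkZ g R pc" 0 mem] by (simp add: blkZ_def)

lemma blkZ_s1: "at P pc (blkZ g R pc) \<Longrightarrow> step P (Suc pc, mem) = (Suc (Suc pc), mem((g+6) := mem (g+22) - mem (g+4)))"
  using step_gen[of P pc "blkZ g R pc" 1 mem] by (simp add: blkZ_def)

lemma blkZ_s2: "at P pc (blkZ g R pc) \<Longrightarrow> step P (Suc (Suc pc), mem) = (pc + 3, mem((g+8) := mem (g+21) + mem (g+4)))"
  using step_gen[of P pc "blkZ g R pc" 2 mem] by (simp add: blkZ_def)

lemma blkZ_s3: "at P pc (blkZ g R pc) \<Longrightarrow> step P (pc + 3, mem) = (pc + 4, mem((g+9) := mem (g+4) + mem g))"
  using step_gen[of P pc "blkZ g R pc" 3 mem] by (simp add: blkZ_def)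

lemma blkZ_s4: "at P pc (blkZ g R pc) \<Longrightarrow> step P (pc + 4, mem) = (if mem (g+6) = 0 then (pc+11) else pc + 5, mem)"
  using step_gen[of P pc "blkZ g R pc" 4 mem] by (simp add: blkZ_def)

lemma blkZ_s5: "at P pc (blkZ g R pc) \<Longrightarrow> step P (pc + 5, mem) = (pc + 6, mem((g+10) := mem (mem (g+8))))"
  using step_gen[of P pc "blkZ g R pc" 5 mem] by (simp add: blkZ_def)

lemma blkZ_s6: "at P pc (blkZ g R pc) \<Longrightarrow> step P (pc + 6, mem) = (pc + 7, mem(mem (g+9) := mem (g+10)))"
  using step_gen[of P pc "blkZ g R pc" 6 mem] by (simp add: blkZ_def)

lemma blkZ_s7: "at P pc (blkZ g R pc) \<Longrightarrow> step P (pc + 7, mem) = (pc + 8, mem((g+8) := mem (g+8) + mem (g+1)))"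
  using step_gen[of P pc "blkZ g R pc" 7 mem] by (simp add: blkZ_def)

lemma blkZ_s8: "at P pc (blkZ g R pc) \<Longrightarrow> step P (pc + 8, mem) = (pc + 9, mem((g+9) := mem (g+9) + mem (g+1)))"
  using step_gen[of P pc "blkZ g R pc" 8 mem] by (simp add: blkZ_def)

lemma blkZ_s9: "at P pc (blkZ g R pc) \<Longrightarrow> step P (pc + 9, mem) = (pc + 10, mem((g+6) := mem (g+6) - mem (g+1)))"
  using step_gen[of P pc "blkZ g R pc" 9 mem] by (simp add: blkZ_def)

lemma blkZ_s10: "at P pc (blkZ g R pc) \<Longrightarrow> step P (pc + 10, mem) = (if mem g = 0 then (pc+4) else pc + 11, mem)"
  using step_gen[of P pc "blkZ g R pc" 10 mem] by (simp add: blkZ_def)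

lemma blkZ_s11: "at P pc (blkZ g R pc) \<Longrightarrow> step P (pc + 11, mem) = (pc + 12, mem((g+4) := (g+R-1)))"
  using step_gen[of P pc "blkZ g R pc" 11 mem] by (simp add: blkZ_def)

lemma blkZ_s12: "at P pc (blkZ g R pc) \<Longrightarrow> step P (pc + 12, mem) = (pc + 13, mem((g+R-1) := mem (g+21) + mem (g+4)))"
  using step_gen[of P pc "blkZ g R pc" 12 mem] by (simp add: blkZ_def)

lemmas blkZ_steps = blkZ_s0 blkZ_s1 blkZ_s2 blkZ_s3 blkZ_s4 blkZ_s5 blkZ_s6 blkZ_s7 blkZ_s8 blkZ_s9 blkZ_s10 blkZ_s11 blkZ_s12


lemma Z_it:
  assumes at: "at P pc (blkZ g R pc)" and g: "2 \<le> g"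
  and rr: "mo g = 0" "mo (g+1) = 1" "mo (g+6) = kk" "mo (g+8) = p" "mo (g+9) = q" "mo p = v" and nz: "kk \<noteq> 0"
  and ne: "q \<noteq> g" "q \<noteq> g+1" "q \<noteq> g+6" "q \<noteq> g+8" "q \<noteq> g+9" "q \<noteq> g+10"
      "g \<noteq> q" "g+1 \<noteq> q" "g+6 \<noteq> q" "g+8 \<noteq> q" "g+9 \<noteq> q" "g+10 \<noteq> q" "p \<noteq> g + 10"
  shows "(step P ^^ 7) (pc + 4, mo) = (pc + 4, mo(g+10 := v, q := v, g+8 := Suc p, g+9 := Suc q, g+6 := kk - Suc 0))"
  using g rr nz ne by (simp add: blkZ_steps[OF at] funpow_numeral funpow_1')

lemma Z_init:
  assumes at: "at P pc (blkZ g R pc)" and g: "2 \<le> g" and r: "mem g = 0" "mem (g+22) = L" "mem (g+21) = Ob"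
  shows "(step P ^^ 4) (pc, mem) = (pc + 4, mem(g+4 := g + R, g+6 := L - (g + R), g+8 := Ob + (g + R), g+9 := g + R))"
  using g r by (simp add: blkZ_steps[OF at] funpow_numeral funpow_1')

lemma Z_exit:
  assumes at: "at P pc (blkZ g R pc)" and g: "2 \<le> g" and R: "2 \<le> R" and r: "mem (g+6) = 0" "mem (g+21) = Ob"
  shows "(step P ^^ 3) (pc + 4, mem) = (pc + 13, mem(g+4 := g + R - 1, g + R - 1 := Ob + (g + R - 1)))"
  using g r R by (simp add: blkZ_steps[OF at] funpow_numeral funpow_1')


definition tailZ :: "nat \<Rightarrow> instr list" where
  "tailZ t = concat (map (\<lambda>c. [Const c (t - c), Sub c t c, Load c c]) [0..<t]) @ [Load t t]"

lemma tail_pre_Suc: "concat (map (\<lambda>c. [Const c (t - c), Sub c t c, Load c c]) [0..<Suc J]) =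
   concat (map (\<lambda>c. [Const c (t - c), Sub c t c, Load c c]) [0..<J]) @ [Const J (t - J), Sub J t J, Load J J]"
  by simp

lemma tail_len[simp]: "length (tailZ t) = 3 * t + 1"
proof -
  have "length (concat (map (\<lambda>c. [Const c (t - c), Sub c t c, Load c c]) [0..<J])) = 3 * J" for J
    by (induction J) (simp_all only: tail_pre_Suc length_append, simp_all)
  thus ?thesis by (simp add: tailZ_def)
qed

lemma tail_straight: "list_all straight (tailZ t)"
  by (simp add: tailZ_def list_all_iff)

lemma tail_fold_pre:
  assumes top: "mem t = Ob + t" and Ob: "t < Ob" and J: "J \<le> t"
  shows "let m' = fold mexec (concat (map (\<lambda>c. [Const c (t - c), Sub c t c, Load c c]) [0..<J])) mem in
     (\<forall>c<J. m' c = mem (Ob + c)) \<and> (\<forall>a. J \<le> a \<longrightarrow> m' a = mem a)"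
  using J
proof (induction J)
  case 0 then show ?case by simp
next
  case (Suc J)
  define m1 where "m1 = fold mexec (concat (map (\<lambda>c. [Const c (t - c), Sub c t c, Load c c]) [0..<J])) mem"
  have IH: "\<forall>c<J. m1 c = mem (Ob + c)" "\<forall>a. J \<le> a \<longrightarrow> m1 a = mem a" using Suc by (simp_all add: m1_def Let_def)
  have Jt: "J < t" using Suc.prems by simp
  have mt: "m1 t = Ob + t" using IH(2) top Jt by simp
  have mo: "m1 (Ob + J) = mem (Ob + J)" using IH(2) by simp
  have f: "fold mexec (concat (map (\<lambda>c. [Const c (t - c), Sub c t c, Load c c]) [0..<Suc J])) mem =
     m1(J := mem (Ob + J))"
  proof -
    have "fold mexec (concat (map (\<lambda>c. [Const c (t - c), Sub c t c, Load c c]) [0..<Suc J])) mem =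
      fold mexec [Const J (t - J), Sub J t J, Load J J] m1"
      by (simp only: tail_pre_Suc fold_append comp_apply m1_def)
    also have "\<dots> = m1(J := mem (Ob + J))" using mt mo Jt Ob by (simp add: fun_eq_iff)
    finally show ?thesis .
  qed
  show ?case unfolding f Let_def using IH by (auto simp: less_Suc_eq)
qed

lemma tail_fold:
  assumes top: "mem t = Ob + t" and Ob: "t < Ob"
  shows "(\<forall>c\<le>t. fold mexec (tailZ t) mem c = mem (Ob + c)) \<and> (\<forall>a. t < a \<longrightarrow> fold mexec (tailZ t) mem a = mem a)"
proof -
  define m1 where "m1 = fold mexec (concat (map (\<lambda>c. [Const c (t - c), Sub c t c, Load c c]) [0..<t])) mem"
  have P: "\<forall>c<t. m1 c = mem (Ob + c)" "\<forall>a. t \<le> a \<longrightarrow> m1 a = mem a"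
    using tail_fold_pre[where mem=mem and t=t and Ob=Ob and J=t, OF top Ob] by (simp_all add: m1_def Let_def)
  have "fold mexec (tailZ t) mem = m1(t := m1 (m1 t))" by (simp add: tailZ_def m1_def)
  moreover have "m1 (m1 t) = mem (Ob + t)" using P(2) top by simp
  ultimately show ?thesis using P by (auto simp: le_less)
qed

lemma phaseZ:
  assumes at0: "at P pc (blkZ g R pc @ tailZ (g + R - 1) @ [Halt])" and g: "2 \<le> g" and R: "24 \<le> R"
    and r: "mem g = 0" "mem (g+1) = 1" "mem (g+22) = L" "mem (g+21) = Ob" and Ob: "L \<le> Ob" "g + R \<le> Ob"
  shows "\<exists>mem'. reach P (pc, mem) (4 + ((L - (g + R)) * 7 + 3) + (3 * (g + R - 1) + 1)) (pc + 13 + (3 * (g + R - 1) + 1), mem') \<and>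
      (\<forall>j<L. mem' j = mem (Ob + j))"
proof -
  have at: "at P pc (blkZ g R pc)" and att: "at P (pc + 13) (tailZ (g + R - 1))"
    using at0 by (simp_all add: at_append)
  define N where "N = L - (g + R)"
  let ?m0 = "mem(g+4 := g + R, g+6 := L - (g + R), g+8 := Ob + (g + R), g+9 := g + R)"
  define fr where "fr = (\<lambda>k a. a \<notin> {g+4, g+6, g+8, g+9, g+10} \<and> \<not> (g + R \<le> a \<and> a < g + R + k))"
  let ?I = "\<lambda>k m'. m' (g+8) = Ob + (g + R) + k \<and> m' (g+9) = g + R + k \<and> m' (g+6) = N - k \<and>
     (\<forall>j. g + R \<le> j \<and> j < g + R + k \<longrightarrow> m' j = mem (Ob + j)) \<and> (\<forall>a. fr k a \<longrightarrow> m' a = mem a)"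
  let ?Q = "\<lambda>m'. m' (g + R - 1) = Ob + (g + R - 1) \<and>
     (\<forall>j. g + R \<le> j \<and> j < L \<longrightarrow> m' j = mem (Ob + j)) \<and> (\<forall>a. fr N a \<and> a \<noteq> g + R - 1 \<longrightarrow> m' a = mem a)"
  have init: "(step P ^^ 4) (pc, mem) = (pc + 4, ?m0)" using Z_init[OF at g r(1) r(3) r(4)] .
  have I0: "?I 0 ?m0" using g by (auto simp: fr_def N_def)
  have L: "\<exists>m'. reach P (pc + 4, ?m0) (N * 7 + 3) (pc + 13, m') \<and> ?Q m'"
  proof (rule loop_rule[where I = ?I])
    fix k mo assume k: "k < N" and I: "?I k mo"
    have fro: "\<And>a. fr k a \<Longrightarrow> mo a = mem a" using I by blast
    have rr: "mo g = 0" "mo (g+1) = 1" using fro[of g] fro[of "g+1"] r R by (auto simp: fr_def)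
    define p where "p = Ob + (g + R) + k"
    define q where "q = g + R + k"
    have kL: "g + R + k < L" using k by (simp add: N_def)
    have rc: "mo (g+6) = N - k" "mo (g+8) = p" "mo (g+9) = q" "mo p = mem p"
      using I fro[of p] kL Ob R by (auto simp: fr_def p_def q_def)
    have nz: "N - k \<noteq> 0" using k by simp
    have ne: "q \<noteq> g" "q \<noteq> g+1" "q \<noteq> g+6" "q \<noteq> g+8" "q \<noteq> g+9" "q \<noteq> g+10"
      "g \<noteq> q" "g+1 \<noteq> q" "g+6 \<noteq> q" "g+8 \<noteq> q" "g+9 \<noteq> q" "g+10 \<noteq> q" "p \<noteq> g + 10"
      using R by (auto simp: p_def q_def)
    have ex: "reach P (pc + 4, mo) 7 (pc + 4, mo(g+10 := mem p, q := mem p, g+8 := Suc p, g+9 := Suc q, g+6 := N - k - Suc 0))"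
      using reach_eq[OF Z_it[OF at g rr rc(1,2,3,4) nz ne]] .
    have "?I (Suc k) (mo(g+10 := mem p, q := mem p, g+8 := Suc p, g+9 := Suc q, g+6 := N - k - Suc 0))"
    proof (intro conjI allI impI)
      fix j assume j: "g + R \<le> j \<and> j < g + R + Suc k"
      show "(mo(g+10 := mem p, q := mem p, g+8 := Suc p, g+9 := Suc q, g+6 := N - k - Suc 0)) j = mem (Ob + j)"
      proof (cases "j = q")
        case True thus ?thesis using R by (simp add: p_def q_def add_ac)
      next
        case False thus ?thesis using j I R by (auto simp: q_def)
      qed
    next
      fix a assume a: "fr (Suc k) a"
      thus "(mo(g+10 := mem p, q := mem p, g+8 := Suc p, g+9 := Suc q, g+6 := N - k - Suc 0)) a = mem a"
        using fro[of a] by (auto simp: fr_def q_def)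
    qed (simp_all add: p_def q_def)
    thus "\<exists>m''. reach P (pc + 4, mo) 7 (pc + 4, m'') \<and> ?I (Suc k) m''" using ex by blast
  next
    fix mo assume I: "?I N mo"
    have r6: "mo (g+6) = 0" and r21: "mo (g+21) = Ob" using I r R by (auto simp: fr_def)
    have "(step P ^^ 3) (pc + 4, mo) = (pc + 13, mo(g+4 := g + R - 1, g + R - 1 := Ob + (g + R - 1)))"
      using Z_exit[OF at g _ r6 r21] R by simp
    moreover have "?Q (mo(g+4 := g + R - 1, g + R - 1 := Ob + (g + R - 1)))"
      using I R by (auto simp: fr_def N_def)
    ultimately show "\<exists>m''. reach P (pc + 4, mo) 3 (pc + 13, m'') \<and> ?Q m''"
      by (blast intro: reach_eq)
  qed (rule I0)
  then obtain m1 where m1: "reach P (pc + 4, ?m0) (N * 7 + 3) (pc + 13, m1)" "?Q m1" by blast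
  have tf: "(\<forall>c\<le>g + R - 1. fold mexec (tailZ (g + R - 1)) m1 c = m1 (Ob + c)) \<and>
     (\<forall>a. g + R - 1 < a \<longrightarrow> fold mexec (tailZ (g + R - 1)) m1 a = m1 a)"
    using tail_fold[of m1 "g + R - 1" Ob] m1(2) Ob R by simp
  have rt: "reach P (pc + 13, m1) (3 * (g + R - 1) + 1) (pc + 13 + (3 * (g + R - 1) + 1), fold mexec (tailZ (g + R - 1)) m1)"
    using run_straight[OF att tail_straight, of m1] by simp
  have "\<forall>j<L. fold mexec (tailZ (g + R - 1)) m1 j = mem (Ob + j)"
  proof (intro allI impI)
    fix j assume j: "j < L"
    show "fold mexec (tailZ (g + R - 1)) m1 j = mem (Ob + j)"
    proof (cases "j \<le> g + R - 1")
      case True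
      hence "fold mexec (tailZ (g + R - 1)) m1 j = m1 (Ob + j)" using tf by blast
      moreover have "m1 (Ob + j) = mem (Ob + j)"
      proof -
        have "fr N (Ob + j) \<and> Ob + j \<noteq> g + R - 1" using Ob R by (auto simp: fr_def N_def)
        thus ?thesis using m1(2) by blast
      qed
      ultimately show ?thesis by simp
    next
      case False
      hence "fold mexec (tailZ (g + R - 1)) m1 j = m1 j" using tf by auto
      moreover have "m1 j = mem (Ob + j)" using m1(2) False j R by auto
      ultimately show ?thesis by simp
    qed
  qed
  moreover have "reach P (pc, mem) (4 + (N * 7 + 3) + (3 * (g + R - 1) + 1)) (pc + 13 + (3 * (g + R - 1) + 1), fold mexec (tailZ (g + R - 1)) m1)"
    using reach_trans[OF reach_trans[OF reach_eq[OF init] m1(1)] rt] .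
  ultimately show ?thesis unfolding N_def by blast
qed


definition front :: "nat \<Rightarrow> nat \<Rightarrow> instr list" where
  "front g R = blkA g R @ blkB g R (2*R) @ blkC g R (2*R+10) @ blkD g (2*R+18) @ blkE g R (2*R+28) R @ blkF g R (12*R+28)"

lemma front_len: "length (front g R) = 12*R + 49"
  by (simp add: front_def)

definition TF :: "nat \<Rightarrow> nat \<Rightarrow> nat \<Rightarrow> nat" where
  "TF m n R = 2*R + (4 + (n*6+3)) + (2 + (n*4+3)) + (3 + (n*m*7+1)) + 9*R + (6 + (m*(6*n+10)+1))"

lemma front_spec:
  assumes at: "at P 0 (front g R @ rest)" and g: "2 \<le> g" and R: "24 \<le> R"
    and m0: "mem 0 = m" and m1: "mem 1 = n" and bits: "\<forall>a\<ge>g. mem a \<le> 1"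
  shows "\<exists>mem'. reach P (0, mem) (TF m n R) (12*R+49, mem') \<and> mem' g = 0 \<and> mem' (g+1) = 1 \<and> mem' (g+2) = n \<and>
     mem' 0 = m \<and> mem' (g+12) = 2*(n*m) + g + 2*R \<and> (\<forall>a. 2 \<le> a \<and> a < g \<longrightarrow> mem' a = mem a) \<and>
     (\<forall>c<m. mem' (2*(n*m) + g + 2*R + c) = (\<Sum>i<n. mem (g + (i*m + c))))"
proof -
  have atA: "at P 0 (blkA g R)" and atB: "at P (2*R) (blkB g R (2*R))" and atC: "at P (2*R+10) (blkC g R (2*R+10))"
    and atD: "at P (2*R+18) (blkD g (2*R+18))" and atE: "at P (2*R+28) (blkE g R (2*R+28) R)"
    and atF: "at P (12*R+28) (blkF g R (12*R+28))"
    using at by (simp_all add: front_def at_append add.commute)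
  define b where "b = (\<lambda>i. mem (g + i))"
  have b1: "\<And>i. b i \<le> 1" using bits by (simp add: b_def)
  define y where "y = bs b R"
  have y: "y < 2^R" "y = tlv b R 0" using tl_bound[of b R 0, OF b1] by (simp_all add: y_def bs_tl)
  define memA where "memA = mem(1 := 2^R * mem 1 + y)"
  have rA: "reach P (0, mem) (2*R) (2*R, memA)"
    using phaseA[OF atA g, of mem] by (simp add: memA_def y_def b_def)
  obtain memB where rB: "reach P (2*R, memA) (4 + (n * 6 + 3)) (2*R + 10, memB)" and
    B: "memB 1 = y" "memB (g+2) = n" "memB g = 0" "memB (g+1) = 1" "\<forall>a. a \<noteq> 1 \<longrightarrow> a < g \<or> g + 5 \<le> a \<longrightarrow> memB a = memA a"
    using phaseB[OF atB g, of memA n y] y m1 by (auto simp: memA_def)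
  have B0: "memB 0 = m" using B(5) g m0 by (simp add: memA_def)
  define S where "S = n * m"
  define BB where "BB = S + (g + R)"
  obtain memC where rC: "reach P (2*R+10, memB) (2 + (n * 4 + 3)) (2*R+10 + 8, memC)" and
    C: "memC (g+5) = n * m" "memC (g+7) = n * m + (g + R)" "\<forall>a. a < g + 4 \<or> g + 8 \<le> a \<longrightarrow> memC a = memB a"
    using phaseC[OF atC g B(3) B(4) B(2) B0] by blast
  have Cr: "memC g = 0" "memC (g+1) = 1" "memC (g+5) = S" "memC (g+7) = BB" "memC 1 = y" "memC (g+2) = n" "memC 0 = m"
    using C B B0 g by (auto simp: S_def BB_def)
  obtain memD where rD: "reach P (2*R+18, memC) (3 + (S * 7 + 1)) (2*R+18 + 10, memD)" and
    D: "\<forall>i. R \<le> i \<and> i < S \<longrightarrow> memD (BB + i) = memC (g + i)"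
       "\<forall>a. a \<notin> {g+4, g+6, g+8, g+9} \<and> (a < BB \<or> BB + S \<le> a) \<longrightarrow> memD a = memC a"
    using phaseD[OF atD g _ Cr(1) Cr(2) Cr(3) Cr(4) BB_def] R by auto
  have Dr: "memD g = 0" "memD (g+1) = 1" "memD (g+7) = BB" "memD 1 = tlv b R 0" "memD (g+2) = n" "memD 0 = m"
     "memD (g+5) = S"
    using D(2) Cr y R by (auto simp: BB_def)
  obtain memE where rE: "reach P (2*R+28, memD) (9 * R) (2*R+28 + 10 * R, memE)" and
    E: "memE 1 = tlv b R R" "\<forall>i<R. memE (BB + i) = b i"
       "\<forall>a. a \<notin> {1, g+3, g+4, g+9, g+10} \<and> \<not> (BB \<le> a \<and> a < BB + R) \<longrightarrow> memE a = memD a"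
    using phaseE_gen[OF atE g _ Dr(1) Dr(2) Dr(3) Dr(4) _ b1 le_refl] R by (auto simp: BB_def)
  have Efr: "\<And>a. a \<notin> {1, g+3, g+4, g+9, g+10} \<Longrightarrow> a < BB \<Longrightarrow> memE a = memD a" using E(3) by auto
  have BBg: "g + R \<le> BB" by (simp add: BB_def)
  have Er: "memE g = 0" "memE (g+1) = 1" "memE (g+2) = n" "memE 0 = m" "memE (g+5) = n * m" "memE (g+7) = BB"
    using Efr[of g] Efr[of "g+1"] Efr[of "g+2"] Efr[of 0] Efr[of "g+5"] Efr[of "g+7"] Dr R BBg g by (auto simp: S_def)
  have mat: "memE (BB + i) = mem (g + i)" if i: "i < S" for i
  proof (cases "i < R")
    case True thus ?thesis using E(2) by (simp add: b_def)
  next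
    case False
    hence "memE (BB + i) = memD (BB + i)" using E(3) R BBg by auto
    also have "\<dots> = memC (g + i)" using D(1) False i by auto
    also have "\<dots> = memB (g + i)" using C(3) False R by auto
    also have "\<dots> = memA (g + i)" using B(5) False R g by auto
    also have "\<dots> = mem (g + i)" using g by (simp add: memA_def)
    finally show ?thesis .
  qed
  define Cb where "Cb = BB + n * m + R"
  obtain memF where rF: "reach P (12*R+28, memE) (6 + (m * (6 * n + 10) + 1)) (12*R+28 + 21, memF)" and
    F: "memF (g+12) = Cb" "\<forall>c<m. memF (Cb + c) = colsum memE BB m n n c"
       "\<forall>a. (a < g + 4 \<or> (g + 19 \<le> a \<and> a < Cb) \<or> Cb + m \<le> a \<or> a \<in> {g+5, g+6, g+7, g+8, g+9, g+10}) \<longrightarrow> memF a = memE a"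
    using phaseF[OF atF g _ Er(1) Er(2) Er(3) Er(4) Er(5) Er(6) _ Cb_def] R by (auto simp: BB_def)
  have cs: "colsum memE BB m n n c = (\<Sum>i<n. mem (g + (i*m + c)))" if c: "c < m" for c
    unfolding colsum_def
  proof (rule sum.cong)
    fix i assume "i \<in> {..<n}"
    hence "i * m + c < S" using idx_bound[OF c, of i n] by (simp add: S_def add.commute)
    thus "memE (BB + i * m + c) = mem (g + (i * m + c))" using mat by (simp add: add.assoc)
  qed simp
  have Fr: "memF g = 0" "memF (g+1) = 1" "memF (g+2) = n" "memF 0 = m"
    using F(3) Er by auto
  have F2: "\<forall>a. 2 \<le> a \<and> a < g \<longrightarrow> memF a = mem a"
  proof (intro allI impI)
    fix a assume a: "2 \<le> a \<and> a < g"
    have "memF a = memE a" using F(3) a by auto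
    also have "\<dots> = memD a" using E(3) a R by (auto simp: BB_def)
    also have "\<dots> = memC a" using D(2) a by (auto simp: BB_def)
    also have "\<dots> = memB a" using C(3) a by auto
    also have "\<dots> = memA a" using B(5) a by auto
    finally show "memF a = mem a" using a by (simp add: memA_def)
  qed
  have Cbv: "Cb = 2*(n*m) + g + 2*R" by (simp add: Cb_def BB_def S_def)
  have "reach P (0, mem) (TF m n R) (12*R+49, memF)"
  proof -
    have rC': "reach P (2*R+10, memB) (2 + (n * 4 + 3)) (2*R+18, memC)" using rC by (simp add: add.assoc)
    have rD': "reach P (2*R+18, memC) (3 + (S * 7 + 1)) (2*R+28, memD)" using rD by (simp add: add.assoc)
    have rE': "reach P (2*R+28, memD) (9 * R) (12*R+28, memE)" using rE by (simp add: add.assoc)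
    have "reach P (0, mem) (2*R + (4 + (n*6+3)) + (2 + (n*4+3)) + (3 + (S*7+1)) + 9*R + (6 + (m*(6*n+10)+1))) (12*R+28 + 21, memF)"
      using reach_trans[OF reach_trans[OF reach_trans[OF reach_trans[OF reach_trans[OF rA rB] rC'] rD'] rE'] rF] by simp
    thus ?thesis by (simp add: TF_def S_def mult.commute add.commute)
  qed
  thus ?thesis using Fr F2 F(1,2) cs Cbv by auto
qed


lemma enc_0: "enc_election off m V 0 = m" by (simp add: enc_election_def)
lemma enc_1: "enc_election off m V 1 = length V" by (simp add: enc_election_def)
lemma enc_le1: "2 \<le> off \<Longrightarrow> off \<le> a \<Longrightarrow> enc_election off m V a \<le> 1"
  by (simp add: enc_election_def)
lemma enc_bit: assumes "2 \<le> off" "c < m" "i < length V"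
  shows "enc_election off m V (off + (i * m + c)) = (if c \<in> V ! i then 1 else 0)"
proof -
  have b: "i * m + c < length V * m" using idx_bound[OF assms(2,3)] by (simp add: add.commute)
  have "(i * m + c) mod m = c" "(i * m + c) div m = i" using assms(2) by simp_all
  thus ?thesis using assms b by (simp add: enc_election_def)
qed

lemma acnt_sum: "(\<Sum>i<length V. if c \<in> V ! i then 1 else 0) = acnt V c"
proof (induction V)
  case Nil then show ?case by (simp add: acnt_def)
next
  case (Cons v V)
  have "(\<Sum>i<length (v # V). if c \<in> (v # V) ! i then 1 else (0::nat)) =
     (if c \<in> v then 1 else 0) + (\<Sum>i<length V. if c \<in> V ! i then 1 else 0)"
    by (simp only: length_Cons sum.lessThan_Suc_shift nth_Cons_0 nth_Cons_Suc)
  then show ?case using Cons by (simp add: acnt_def)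
qed

lemma strict_eq: "{c. c < m \<and> length V < 2 * acnt V c} = strict m V"
  by (auto simp: strict_def wt_def)

lemma weak_strict_eq: "{c. c < m \<and> 2 * acnt V c = length V} = weak m V - strict m V"
  by (auto simp: strict_def weak_def wt_def)

lemma card_sel: "card {c. c < (M::nat) \<and> Q c \<and> card {c'. c' < c \<and> Q c'} < j} = min j (card {c. c < M \<and> Q c})"
proof (induction M)
  case 0 then show ?case by simp
next
  case (Suc M)
  have e1: "{c. c < Suc M \<and> Q c \<and> card {c'. c' < c \<and> Q c'} < j} =
     {c. c < M \<and> Q c \<and> card {c'. c' < c \<and> Q c'} < j} \<union> (if Q M \<and> card {c'. c' < M \<and> Q c'} < j then {M} else {})"
    by (auto simp: less_Suc_eq)
  have e2: "{c. c < Suc M \<and> Q c} = {c. c < M \<and> Q c} \<union> (if Q M then {M} else {})"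
    by (auto simp: less_Suc_eq)
  show ?case using Suc by (auto simp: e1 e2 card_insert_if)
qed


definition P1 :: "instr list" where
  "P1 = front 2 24 @ blkG1 2 337 @ blkZ 2 24 354 @ tailZ 25 @ [Halt]"


lemma task1:
  assumes v: "valid_election m V"
  shows "\<exists>t mem. t \<le> 1000 * election_size m V ^ 1 \<and> runs_within P1 (enc_election 2 m V) t mem \<and>
     (\<forall>c<m. mem c = (if length V < 2 * acnt V c then 1 else 0))"
proof -
  define n where "n = length V"
  define mem0 where "mem0 = enc_election 2 m V"
  have at0: "at P1 0 (front 2 24 @ (blkG1 2 337 @ blkZ 2 24 354 @ tailZ 25 @ [Halt]))"
    using at_self[of P1] by (simp add: P1_def)
  have atG: "at P1 337 (blkG1 2 337)" and atZ: "at P1 354 (blkZ 2 24 354 @ tailZ (2 + 24 - 1) @ [Halt])"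
    and atH: "at P1 443 [Halt]"
    using at_self[of P1] by (simp_all add: P1_def at_append front_len)
  have m0: "mem0 0 = m" unfolding mem0_def by (rule enc_0)
  have m1: "mem0 1 = n" unfolding mem0_def n_def by (rule enc_1)
  have bits: "\<forall>a\<ge>2. mem0 a \<le> 1" unfolding mem0_def by (intro allI impI enc_le1) auto
  obtain memF where rF: "reach P1 (0, mem0) (TF m n 24) (12*24+49, memF)" and
    F: "memF 2 = 0" "memF (2+1) = 1" "memF (2+2) = n" "memF 0 = m" "memF (2+12) = 2*(n*m) + 2 + 2*24"
       "\<forall>c<m. memF (2*(n*m) + 2 + 2*24 + c) = (\<Sum>i<n. mem0 (2 + (i*m + c)))"
    using front_spec[OF at0 order.refl order.refl m0 m1 bits] by auto
  define Cb where "Cb = 2*(n*m) + 2 + 2*24"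
  have cnt: "memF (Cb + c) = acnt V c" if c: "c < m" for c
  proof -
    have "memF (Cb + c) = (\<Sum>i<n. mem0 (2 + (i*m + c)))" using F(6) c by (simp add: Cb_def)
    also have "\<dots> = (\<Sum>i<length V. if c \<in> V ! i then 1 else 0)"
    proof (rule sum.cong)
      show "{..<n} = {..<length V}" by (simp add: n_def)
      fix i assume "i \<in> {..<length V}"
      hence "i < length V" by simp
      thus "mem0 (2 + (i*m + c)) = (if c \<in> V ! i then 1 else 0)"
        unfolding mem0_def using enc_bit[of 2 c m i V] c by simp
    qed
    finally show ?thesis by (simp add: acnt_sum)
  qed
  obtain memG where rG: "reach P1 (337, memF) (4 + (m * 11 + 2)) (337 + 17, memG)" and
    G: "memG (2+21) = Cb + m" "memG (2+22) = m"
       "\<forall>c<m. memG (Cb + m + c) = (if n < 2 * memF (Cb + c) then 1 else 0)"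
       "\<forall>a. a \<notin> {2+4, 2+14, 2+15, 2+17, 2+21, 2+22} \<and> a < Cb + m \<longrightarrow> memG a = memF a"
    using phaseG1[OF atG _ F(1) F(2) F(3) F(4), of Cb] F(5) by (auto simp: Cb_def)
  have Gr: "memG 2 = 0" "memG (2+1) = 1" using G(4) F(1,2) by (auto simp: Cb_def)
  obtain memZ where rZ: "reach P1 (354, memG) (4 + ((m - (2 + 24)) * 7 + 3) + (3 * (2 + 24 - 1) + 1)) (354 + 13 + (3 * (2 + 24 - 1) + 1), memZ)"
    and Z: "\<forall>j<m. memZ j = memG (Cb + m + j)"
    using phaseZ[OF atZ _ _ Gr(1) Gr(2) G(2) G(1)] by (auto simp: Cb_def)
  have rall: "reach P1 (0, mem0) (TF m n 24 + (4 + (m * 11 + 2)) + (4 + ((m - (2 + 24)) * 7 + 3) + (3 * (2 + 24 - 1) + 1))) (443, memZ)"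
  proof -
    have a: "reach P1 (0, mem0) (TF m n 24) (337, memF)" using rF by simp
    have b: "reach P1 (337, memF) (4 + (m * 11 + 2)) (354, memG)" using rG by simp
    have c: "reach P1 (354, memG) (4 + ((m - (2 + 24)) * 7 + 3) + (3 * (2 + 24 - 1) + 1)) (443, memZ)" using rZ by simp
    show ?thesis using reach_trans[OF reach_trans[OF a b] c] .
  qed
  then obtain t where t: "t \<le> TF m n 24 + (4 + (m * 11 + 2)) + (4 + ((m - (2 + 24)) * 7 + 3) + (3 * (2 + 24 - 1) + 1))"
     "(step P1 ^^ t) (0, mem0) = (443, memZ)" by (auto simp: reach_def)
  have "halted P1 (443, memZ)" using atH by (simp add: at_Cons halted_def)
  hence run: "runs_within P1 mem0 t memZ" using t(2) by (simp add: runs_within_def)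
  have tb: "TF m n 24 + (4 + (m * 11 + 2)) + (4 + ((m - (2 + 24)) * 7 + 3) + (3 * (2 + 24 - 1) + 1)) \<le> 1000 * election_size m V ^ 1"
  proof -
    have "m - 26 \<le> m" by simp
    moreover have "election_size m V = m * n + m + n + 1" by (simp add: election_size_def n_def algebra_simps)
    ultimately show ?thesis by (simp add: TF_def algebra_simps)
  qed
  have out: "\<forall>c<m. memZ c = (if length V < 2 * acnt V c then 1 else 0)"
    using Z G(3) cnt by (simp add: n_def)
  show ?thesis using t(1) tb run out unfolding mem0_def by (intro exI[of _ t] exI[of _ memZ]) auto
qed


definition P2 :: "instr list" where
  "P2 = front 3 24 @ blkH1 3 337 @ blkH2 3 350 @ blkH3 3 373 @ blkZ 3 24 383 @ tailZ 26 @ [Halt]"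

lemma task2:
  assumes v: "valid_election m V"
  shows "\<exists>t mem. t \<le> 1000 * election_size m V ^ 1 \<and> runs_within P2 ((enc_election 3 m V)(2 := k)) t mem \<and>
     mem 0 = (if card (strict m V) \<le> k \<and> (k - card (strict m V)) - tc (acnt V) (length V) m = 0 then 1 else 0) \<and>
     (\<forall>c<m. mem (1 + c) = selb (acnt V) (length V) (k - card (strict m V)) c)"
proof -
  define n where "n = length V"
  define mem0 where "mem0 = (enc_election 3 m V)(2 := k)"
  have at0: "at P2 0 (front 3 24 @ (blkH1 3 337 @ blkH2 3 350 @ blkH3 3 373 @ blkZ 3 24 383 @ tailZ 26 @ [Halt]))"
    using at_self[of P2] by (simp add: P2_def)
  have atH1: "at P2 337 (blkH1 3 337)" and atH2: "at P2 350 (blkH2 3 350)" and atH3: "at P2 373 (blkH3 3 373)"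
    and atZ: "at P2 383 (blkZ 3 24 383 @ tailZ (3 + 24 - 1) @ [Halt])"
    and atH: "at P2 475 [Halt]"
    using at_self[of P2] by (simp_all add: P2_def at_append front_len)
  have m0: "mem0 0 = m" unfolding mem0_def using enc_0[of 3 m V] by simp
  have m1: "mem0 1 = n" unfolding mem0_def n_def using enc_1[of 3 m V] by simp
  have m2: "mem0 2 = k" unfolding mem0_def by simp
  have bits: "\<forall>a\<ge>3. mem0 a \<le> 1" unfolding mem0_def using enc_le1[of 3] by auto
  obtain memF where rF: "reach P2 (0, mem0) (TF m n 24) (12*24+49, memF)" and
    F: "memF 3 = 0" "memF (3+1) = 1" "memF (3+2) = n" "memF 0 = m" "memF (3+12) = 2*(n*m) + 3 + 2*24"
       "\<forall>a. 2 \<le> a \<and> a < 3 \<longrightarrow> memF a = mem0 a"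
       "\<forall>c<m. memF (2*(n*m) + 3 + 2*24 + c) = (\<Sum>i<n. mem0 (3 + (i*m + c)))"
    using front_spec[OF at0 _ order.refl m0 m1 bits] by auto
  have F2: "memF 2 = k" using F(6) m2 by simp
  define Cb where "Cb = 2*(n*m) + 3 + 2*24"
  have cnt: "memF (Cb + c) = acnt V c" if c: "c < m" for c
  proof -
    have "memF (Cb + c) = (\<Sum>i<n. mem0 (3 + (i*m + c)))" using F(7) c by (simp add: Cb_def)
    also have "\<dots> = (\<Sum>i<length V. if c \<in> V ! i then 1 else 0)"
    proof (rule sum.cong)
      show "{..<n} = {..<length V}" by (simp add: n_def)
      fix i assume "i \<in> {..<length V}"
      hence "i < length V" by simp
      thus "mem0 (3 + (i*m + c)) = (if c \<in> V ! i then 1 else 0)"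
        unfolding mem0_def using enc_bit[of 3 c m i V] c by simp
    qed
    finally show ?thesis by (simp add: acnt_sum)
  qed
  define s where "s = card {c. c < m \<and> n < 2 * memF (Cb + c)}"
  have s_eq: "s = card (strict m V)"
  proof -
    have "{c. c < m \<and> n < 2 * memF (Cb + c)} = {c. c < m \<and> length V < 2 * acnt V c}"
      using cnt by (auto simp: n_def)
    thus ?thesis by (simp add: s_def strict_eq)
  qed
  obtain mem1 where r1: "reach P2 (337, memF) (4 + (m * 9 + 1)) (337 + 13, mem1)" and
    H1: "mem1 (3+21) = Cb + m" "mem1 (3+18) = s" "\<forall>a. a \<notin> {3+4, 3+14, 3+15, 3+18, 3+21} \<longrightarrow> mem1 a = memF a"
    using phaseH1[OF atH1 _ F(1) F(2) F(3) F(4) F(5)] by (auto simp: s_def Cb_def)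
  have H1r: "mem1 3 = 0" "mem1 (3+1) = 1" "mem1 (3+2) = n" "mem1 0 = m" "mem1 (3+12) = Cb" "mem1 2 = k"
    using H1(3) F F2 by (auto simp: Cb_def)
  have cn1: "\<And>c. c < m \<Longrightarrow> mem1 (Cb + c) = acnt V c" using H1(3) cnt by (auto simp: Cb_def)
  obtain mem2 where r2: "reach P2 (350, mem1) (4 + (m * 16 + 1)) (350 + 23, mem2)" and
    H2: "mem2 (3+19) = (k - s) - tc (\<lambda>c. mem1 (Cb + c)) n m"
       "\<forall>c<m. mem2 (Cb + m + 1 + c) = selb (\<lambda>c. mem1 (Cb + c)) n (k - s) c"
       "\<forall>a. a \<notin> {3+4, 3+14, 3+15, 3+17, 3+19, 3+20} \<and> (a < Cb + m + 1 \<or> Cb + m + 1 + m \<le> a) \<longrightarrow> mem2 a = mem1 a"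
    using phaseH2[OF atH2 _ H1r(1) H1r(2) H1r(3) H1r(4) H1r(5) H1(1) H1r(6) H1(2)] by (auto simp: Cb_def)
  have H2r: "mem2 3 = 0" "mem2 (3+1) = 1" "mem2 0 = m" "mem2 (3+18) = s" "mem2 2 = k" "mem2 (3+21) = Cb + m"
    using H2(3) H1r H1 by (auto simp: Cb_def)
  define bu where "bu = (k - s) - tc (\<lambda>c. mem1 (Cb + c)) n m"
  have r3: "reach P2 (373, mem2) 7 (373 + 10, mem2(Cb + m := (if s \<le> k \<and> bu = 0 then 1 else 0), 3 + 4 := Suc 0, 3 + 22 := Suc m))"
    using phaseH3[OF atH3 _ H2r(1) H2r(2) H2r(3) H2r(4) H2r(5) H2(1) H2r(6)] by (simp add: Cb_def bu_def)
  define mem3 where "mem3 = mem2(Cb + m := (if s \<le> k \<and> bu = 0 then 1 else 0), 3 + 4 := Suc 0, 3 + 22 := Suc m)"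
  have H3r: "mem3 3 = 0" "mem3 (3+1) = 1" "mem3 (3+22) = m + 1" "mem3 (3+21) = Cb + m"
    using H2r by (auto simp: mem3_def Cb_def)
  obtain memZ where rZ: "reach P2 (383, mem3) (4 + ((m + 1 - (3 + 24)) * 7 + 3) + (3 * (3 + 24 - 1) + 1)) (383 + 13 + (3 * (3 + 24 - 1) + 1), memZ)"
    and Z: "\<forall>j<m+1. memZ j = mem3 (Cb + m + j)"
    using phaseZ[OF atZ _ _ H3r(1) H3r(2) H3r(3) H3r(4)] by (auto simp: Cb_def)
  have rall: "reach P2 (0, mem0) (TF m n 24 + (4 + (m * 9 + 1)) + (4 + (m * 16 + 1)) + 7 + (4 + ((m + 1 - (3 + 24)) * 7 + 3) + (3 * (3 + 24 - 1) + 1))) (475, memZ)"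
  proof -
    have a: "reach P2 (0, mem0) (TF m n 24) (337, memF)" using rF by simp
    have b: "reach P2 (337, memF) (4 + (m * 9 + 1)) (350, mem1)" using r1 by simp
    have c: "reach P2 (350, mem1) (4 + (m * 16 + 1)) (373, mem2)" using r2 by simp
    have d: "reach P2 (373, mem2) 7 (383, mem3)" using r3 by (simp add: mem3_def)
    have e: "reach P2 (383, mem3) (4 + ((m + 1 - (3 + 24)) * 7 + 3) + (3 * (3 + 24 - 1) + 1)) (475, memZ)" using rZ by simp
    show ?thesis using reach_trans[OF reach_trans[OF reach_trans[OF reach_trans[OF a b] c] d] e] .
  qed
  then obtain t where t: "t \<le> TF m n 24 + (4 + (m * 9 + 1)) + (4 + (m * 16 + 1)) + 7 + (4 + ((m + 1 - (3 + 24)) * 7 + 3) + (3 * (3 + 24 - 1) + 1))"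
     "(step P2 ^^ t) (0, mem0) = (475, memZ)" by (auto simp: reach_def)
  have "halted P2 (475, memZ)" using atH by (simp add: at_Cons halted_def)
  hence run: "runs_within P2 mem0 t memZ" using t(2) by (simp add: runs_within_def)
  have tb: "TF m n 24 + (4 + (m * 9 + 1)) + (4 + (m * 16 + 1)) + 7 + (4 + ((m + 1 - (3 + 24)) * 7 + 3) + (3 * (3 + 24 - 1) + 1)) \<le> 1000 * election_size m V ^ 1"
  proof -
    have "m + 1 - 27 \<le> m" by simp
    moreover have "election_size m V = m * n + m + n + 1" by (simp add: election_size_def n_def algebra_simps)
    ultimately show ?thesis by (simp add: TF_def algebra_simps)
  qed
  have tc_eq: "tc (\<lambda>c. mem1 (Cb + c)) n m = tc (acnt V) (length V) m"
    unfolding tc_def n_def using cn1 by (intro arg_cong[where f=card]) auto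
  have selb_eq: "selb (\<lambda>c. mem1 (Cb + c)) n (k - s) c = selb (acnt V) (length V) (k - card (strict m V)) c" if c: "c < m" for c
  proof -
    have "tc (\<lambda>c. mem1 (Cb + c)) n c = tc (acnt V) (length V) c"
      unfolding tc_def n_def using cn1 c by (intro arg_cong[where f=card]) auto
    thus ?thesis using cn1[OF c] by (simp add: selb_def s_eq n_def)
  qed
  have out0: "memZ 0 = (if card (strict m V) \<le> k \<and> (k - card (strict m V)) - tc (acnt V) (length V) m = 0 then 1 else 0)"
  proof -
    have "Cb \<ge> 51" by (simp add: Cb_def)
    hence "memZ 0 = (if s \<le> k \<and> bu = 0 then 1 else 0)" using Z by (simp add: mem3_def)
    thus ?thesis by (simp add: bu_def tc_eq s_eq)
  qed
  have out1: "\<forall>c<m. memZ (1 + c) = selb (acnt V) (length V) (k - card (strict m V)) c"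
  proof (intro allI impI)
    fix c assume c: "c < m"
    have "memZ (1 + c) = mem3 (Cb + m + (1 + c))" using Z c by simp
    also have "\<dots> = mem2 (Cb + m + 1 + c)" by (simp add: mem3_def Cb_def add.assoc)
    also have "\<dots> = selb (acnt V) (length V) (k - card (strict m V)) c" using H2(2) c selb_eq[OF c] by simp
    finally show "memZ (1 + c) = selb (acnt V) (length V) (k - card (strict m V)) c" .
  qed
  show ?thesis using t(1) tb run out0 out1 unfolding mem0_def by (intro exI[of _ t] exI[of _ memZ]) auto
qed


lemma part1:
  "\<exists>P a d. \<forall>m V. valid_election m V \<longrightarrow>
      (\<exists>t mem. t \<le> a * election_size m V ^ d \<and>
         runs_within P (enc_election 2 m V) t mem \<and>
         (let S = dec_committee 0 m mem in
            nav_winner {0..<m} V S \<and>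
            (\<forall>T. nav_winner {0..<m} V T \<and> card T \<le> card S \<longrightarrow> T = S)))"
proof (rule exI[of _ P1], rule exI[of _ 1000], rule exI[of _ 1], intro allI impI)
  fix m V assume v: "valid_election m V"
  obtain t mem where t: "t \<le> 1000 * election_size m V ^ 1" "runs_within P1 (enc_election 2 m V) t mem"
    "\<forall>c<m. mem c = (if length V < 2 * acnt V c then 1 else 0)"
    using task1[OF v] by blast
  have D: "dec_committee 0 m mem = strict m V"
  proof -
    have "dec_committee 0 m mem = {c. c < m \<and> length V < 2 * acnt V c}"
      using t(3) by (auto simp: dec_committee_def split: if_splits)
    thus ?thesis by (simp add: strict_eq)
  qed
  have W: "nav_winner {0..<m} V (strict m V)" using strict_sub_weak[of m V] by (simp add: winner_iff)
  show "\<exists>t mem. t \<le> 1000 * election_size m V ^ 1 \<and>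
         runs_within P1 (enc_election 2 m V) t mem \<and>
         (let S = dec_committee 0 m mem in
            nav_winner {0..<m} V S \<and>
            (\<forall>T. nav_winner {0..<m} V T \<and> card T \<le> card S \<longrightarrow> T = S))"
    using t(1,2) D W min_winner by (intro exI[of _ t] exI[of _ mem]) (auto simp: Let_def)
qed

lemma part2:
  "\<exists>P a d. \<forall>m V k. valid_election m V \<longrightarrow>
      (\<exists>t mem. t \<le> a * election_size m V ^ d \<and>
         runs_within P ((enc_election 3 m V)(2 := k)) t mem \<and>
         (if (\<exists>S. nav_winner {0..<m} V S \<and> card S = k)
          then mem 0 \<noteq> 0 \<and> nav_winner {0..<m} V (dec_committee 1 m mem)
                 \<and> card (dec_committee 1 m mem) = k
          else mem 0 = 0))"
proof (rule exI[of _ P2], rule exI[of _ 1000], rule exI[of _ 1], intro allI impI)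
  fix m V k assume v: "valid_election m V"
  obtain t mem where t: "t \<le> 1000 * election_size m V ^ 1" "runs_within P2 ((enc_election 3 m V)(2 := k)) t mem"
    "mem 0 = (if card (strict m V) \<le> k \<and> (k - card (strict m V)) - tc (acnt V) (length V) m = 0 then 1 else 0)"
    "\<forall>c<m. mem (1 + c) = selb (acnt V) (length V) (k - card (strict m V)) c"
    using task2[OF v, of k] by blast
  define s where "s = card (strict m V)"
  define tcm where "tcm = tc (acnt V) (length V) m"
  have fs: "finite (strict m V)" by (simp add: strict_def)
  have tcm_eq: "tcm = card (weak m V - strict m V)"
    by (simp add: tcm_def tc_def weak_strict_eq)
  have w: "card (weak m V) = s + tcm"
    using card_Diff_subset[OF fs strict_sub_weak[of m V]] card_weak_ge[of m V] tcm_eq s_def by simp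
  have cond: "(\<exists>S. nav_winner {0..<m} V S \<and> card S = k) \<longleftrightarrow> s \<le> k \<and> (k - s) - tcm = 0"
    using exists_k_iff[of m V k] w s_def by auto
  define X where "X = {c. c < m \<and> 2 * acnt V c = length V \<and> tc (acnt V) (length V) c < k - s}"
  have D: "dec_committee 1 m mem = strict m V \<union> X"
  proof -
    have "dec_committee 1 m mem = {c. c < m \<and> selb (acnt V) (length V) (k - s) c \<noteq> 0}"
      using t(4) by (auto simp: dec_committee_def s_def)
    also have "\<dots> = strict m V \<union> X"
      by (auto simp: selb_def X_def strict_def wt_def)
    finally show ?thesis .
  qed
  have cX: "card X = min (k - s) tcm"
    unfolding X_def tcm_def tc_def using card_sel[of m "\<lambda>c. 2 * acnt V c = length V" "k - s"]
    by (simp add: conj_assoc)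
  show "\<exists>t mem. t \<le> 1000 * election_size m V ^ 1 \<and>
         runs_within P2 ((enc_election 3 m V)(2 := k)) t mem \<and>
         (if (\<exists>S. nav_winner {0..<m} V S \<and> card S = k)
          then mem 0 \<noteq> 0 \<and> nav_winner {0..<m} V (dec_committee 1 m mem)
                 \<and> card (dec_committee 1 m mem) = k
          else mem 0 = 0)"
  proof (intro exI[of _ t] exI[of _ mem] conjI)
    show "t \<le> 1000 * election_size m V ^ 1" "runs_within P2 ((enc_election 3 m V)(2 := k)) t mem" using t by auto
    show "if (\<exists>S. nav_winner {0..<m} V S \<and> card S = k)
          then mem 0 \<noteq> 0 \<and> nav_winner {0..<m} V (dec_committee 1 m mem)
                 \<and> card (dec_committee 1 m mem) = k
          else mem 0 = 0"
    proof (cases "s \<le> k \<and> (k - s) - tcm = 0")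
      case True
      have m0: "mem 0 \<noteq> 0" using t(3) True by (simp add: s_def tcm_def)
      have sub: "X \<subseteq> weak m V - strict m V" by (auto simp: X_def weak_def strict_def wt_def)
      have win: "nav_winner {0..<m} V (dec_committee 1 m mem)"
        unfolding D winner_iff using sub strict_sub_weak[of m V] by blast
      have fX: "finite X" by (simp add: X_def)
      have dj: "strict m V \<inter> X = {}" using sub by blast
      have "card (dec_committee 1 m mem) = s + card X"
        unfolding D s_def using card_Un_disjoint[OF fs fX dj] .
      also have "\<dots> = k" proof -
          have "k - s \<le> tcm" using True by linarith
          thus ?thesis using cX True by (simp add: min_def)
        qed
      finally show ?thesis using m0 win cond True by simp
    next
      case False
      have ncond: "\<not> (\<exists>S. nav_winner {0..<m} V S \<and> card S = k)" using cond False by simp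
      have "mem 0 = 0" using t(3) False by (simp add: s_def tcm_def)
      thus ?thesis by (subst if_not_P[OF ncond])
    qed
  qed
qed

theorem mainTheorem3:
  shows
  "(\<exists>P a d. \<forall>m V. valid_election m V \<longrightarrow>
      (\<exists>t mem. t \<le> a * election_size m V ^ d \<and>
         runs_within P (enc_election 2 m V) t mem \<and>
         (let S = dec_committee 0 m mem in
            nav_winner {0..<m} V S \<and>
            (\<forall>T. nav_winner {0..<m} V T \<and> card T \<le> card S \<longrightarrow> T = S))))
   \<and>
   (\<exists>P a d. \<forall>m V k. valid_election m V \<longrightarrow>
      (\<exists>t mem. t \<le> a * election_size m V ^ d \<and>
         runs_within P ((enc_election 3 m V)(2 := k)) t mem \<and>
         (if (\<exists>S. nav_winner {0..<m} V S \<and> card S = k)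
          then mem 0 \<noteq> 0 \<and> nav_winner {0..<m} V (dec_committee 1 m mem)
                 \<and> card (dec_committee 1 m mem) = k
          else mem 0 = 0)))"
  using part1 part2 by blast


end
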